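(* For every $n\in\mathbb N_0$ and $d\in\mathbb Z$, letting $T_0\in\{0,\dots,M\}$ with $T_0\equiv n\pmod{M+1}$, $$N(n,d;q)=q^{Mn}\sum_{s\in S(T_0,M+1,d)}\mu_{(M+1)n}(s).$$
   Context: Let $q$ be a prime power and $M\ge1$. A multisequence prefix is $a=(a_{k,m})_{1\le k\le n,\,1\le m\le M}\in(\mathbb F_q^M)^n$. Its linear complexity $L_a(n)$ is the least $L\ge0$ such that there exist $c_1,\dots,c_L\in\mathbb F_q$ with $a_{k,m}=\sum_{i=1}^L c_i a_{k-i,m}$ for all $L<k\le n$ and all $1\le m\le M$ (a single linear feedback shift register of length $L$ generating all $M$ sequences); $L_a(0)=0$. The linear complexity deviation is $d_a(n)=L_a(n)-\lceil nM/(M+1)\rceil$, and $N(n,d;q)$ is the number of $a\in(\mathbb F_q^M)^n$ with $d_a(n)=d$. The BDM: the augmented state set is $\overline S=\{(b_1,\dots,b_M,d;T,t): b_m,d,T\in\mathbb Z,\ 1\le t\le M+1,\ d+T+\sum_m b_m=0\}$, the state set is $S=\{s\in\overline S:0\le T\le M\}$, $S(T_0,t_0,d_0)=\{s\in S:T=T_0,t=t_0,d=d_0\}$, initial state $s_0=(0,\dots,0,0;0,M+1)$. Transitions from $s=(b_1,\dots,b_M,d;T,t)$: if $t\le M$ and $b_t>d$, with probability $(q-1)/q$ to $(b_1,\dots,b_{t-1},d,b_{t+1},\dots,b_M,b_t;T,t+1)$ and with probability $1/q$ to $(b_1,\dots,b_M,d;T,t+1)$; if $t\le M$ and $b_t\le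 d$, with probability 1 to $(b_1,\dots,b_M,d;T,t+1)$; if $t=M+1,T<M$, with probability 1 to $(b_1,\dots,b_M,d-1;T+1,1)$; if $t=M+1,T=M$, with probability 1 to $(b_1+1,\dots,b_M+1,d;0,1)$. Let $\mu_0$ be the point mass at $s_0$ and $\mu_{\tau+1}(s')=\sum_s\mu_\tau(s)p(s,s')$. *)

theory Defs
  imports "HOL-Probability.Probability"
begin

text \<open>Multisequence prefixes of length n over the field 'a with M sequences:
  functions a with a k m the k-th term of the m-th sequence (1 \<le> k \<le> n, 1 \<le> m \<le> M),
  extended by 0 outside this index range.\<close>
definition prefixes :: "nat \<Rightarrow> nat \<Rightarrow> (nat \<Rightarrow> nat \<Rightarrow> 'a::zero) set" where
  "prefixes M n = {a. \<forall>k m. \<not> (1 \<le> k \<and> k \<le> n \<and> 1 \<le> m \<and> m \<le> M) \<longrightarrow> a k m = 0}"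

definition lin_compl :: "nat \<Rightarrow> (nat \<Rightarrow> nat \<Rightarrow> 'a::field) \<Rightarrow> nat \<Rightarrow> nat" where
  "lin_compl M a n = (LEAST L. \<exists>c :: nat \<Rightarrow> 'a. \<forall>k m. L < k \<and> k \<le> n \<and> 1 \<le> m \<and> m \<le> M \<longrightarrow>
        a k m = (\<Sum>i=1..L. c i * a (k - i) m))"

definition lc_dev :: "nat \<Rightarrow> (nat \<Rightarrow> nat \<Rightarrow> 'a::field) \<Rightarrow> nat \<Rightarrow> int" where
  "lc_dev M a n = int (lin_compl M a n) - \<lceil>real (n * M) / real (M + 1)\<rceil>"

definition Ncount :: "'a::{finite,field} itself \<Rightarrow> nat \<Rightarrow> nat \<Rightarrow> int \<Rightarrow> nat" where
  "Ncount _ M n d = card {a :: nat \<Rightarrow> nat \<Rightarrow> 'a. a \<in> prefixes M n \<and> lc_dev M a n = d}"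

text \<open>BDM states (b_1..b_M, d; T, t): b as an int list of length M (b_m = b ! (m-1)).\<close>
type_synonym bdm_state = "int list \<times> int \<times> int \<times> nat"

definition aug_states :: "nat \<Rightarrow> bdm_state set" where
  "aug_states M = {(b, d, T, t). length b = M \<and> 1 \<le> t \<and> t \<le> M + 1 \<and> d + T + sum_list b = 0}"

definition bdm_states :: "nat \<Rightarrow> bdm_state set" where
  "bdm_states M = {s \<in> aug_states M. case s of (b, d, T, t) \<Rightarrow> 0 \<le> T \<and> T \<le> int M}"

definition S_set :: "nat \<Rightarrow> int \<Rightarrow> nat \<Rightarrow> int \<Rightarrow> bdm_state set" where
  "S_set M T0 t0 d0 = {s \<in> bdm_states M. case s of (b, d, T, t) \<Rightarrow> T = T0 \<and> t = t0 \<and> d = d0}"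

definition s_init :: "nat \<Rightarrow> bdm_state" where
  "s_init M = (replicate M 0, 0, 0, M + 1)"

text \<open>One transition of the BDM (states outside the described cases are irrelevant
  and stay put).\<close>
definition bdm_step :: "nat \<Rightarrow> nat \<Rightarrow> bdm_state \<Rightarrow> bdm_state pmf" where
  "bdm_step q M s = (case s of (b, d, T, t) \<Rightarrow>
     if 1 \<le> t \<and> t \<le> M then
       (if b ! (t - 1) > d then
          map_pmf (\<lambda>x. if x then (b, d, T, t + 1) else (b[t - 1 := d], b ! (t - 1), T, t + 1))
                  (bernoulli_pmf (1 / real q))
        else return_pmf (b, d, T, t + 1))
     else if t = M + 1 \<and> T < int M then return_pmf (b, d - 1, T + 1, 1)
     else if t = M + 1 \<and> T = int M then return_pmf (map (\<lambda>x. x + 1) b, d, 0, 1)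
     else return_pmf s)"

primrec bdm_mu :: "nat \<Rightarrow> nat \<Rightarrow> nat \<Rightarrow> bdm_state pmf" where
  "bdm_mu q M 0 = return_pmf (s_init M)"
| "bdm_mu q M (Suc \<tau>) = bind_pmf (bdm_mu q M \<tau>) (bdm_step q M)"

end

theory Submission
  imports Defs
begin


definition bnd :: "'a::zero poly \<Rightarrow> nat \<Rightarrow> bool" where
  "bnd p e \<longleftrightarrow> (\<forall>k\<ge>e. coeff p k = 0)"

lemma bnd_iff: "bnd p e \<longleftrightarrow> p = 0 \<or> degree p < e"
proof
  assume h: "bnd p e"
  show "p = 0 \<or> degree p < e"
  proof (rule ccontr)
    assume "\<not> (p = 0 \<or> degree p < e)"
    then have "p \<noteq> 0" "e \<le> degree p" by auto
    then show False using h unfolding bnd_def by auto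
  qed
next
  assume "p = 0 \<or> degree p < e"
  then show "bnd p e" unfolding bnd_def by (auto intro: coeff_eq_0)
qed

lemma bnd_mono: "bnd p e \<Longrightarrow> e \<le> e' \<Longrightarrow> bnd p e'"
  unfolding bnd_def by auto

lemma bnd_0[simp]: "bnd 0 e" unfolding bnd_def by auto

lemma bnd_add: "bnd p e \<Longrightarrow> bnd q e \<Longrightarrow> bnd (p + q) e"
  unfolding bnd_def by auto

lemma bnd_diff: "bnd p e \<Longrightarrow> bnd (q::'a::ab_group_add poly) e \<Longrightarrow> bnd (p - q) e"
  unfolding bnd_def by auto

lemma bnd_smult: "bnd p e \<Longrightarrow> bnd (smult c p) e"
  unfolding bnd_def by auto

lemma bnd_monom_mult: "bnd p e \<Longrightarrow> bnd (monom c k * p) (k + e)"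
  unfolding bnd_def by (auto simp: coeff_monom_mult)

lemma bnd_mult: "bnd (q::'a::idom poly) e \<Longrightarrow> bnd (p * q) (degree p + e)"
proof -
  assume "bnd q e"
  then have "q = 0 \<or> degree q < e" by (simp add: bnd_iff)
  then show ?thesis
  proof
    assume "q = 0" then show ?thesis by simp
  next
    assume h: "degree q < e"
    show ?thesis
    proof (cases "p = 0 \<or> q = 0")
      case True then show ?thesis by auto
    next
      case False
      then have "degree (p * q) = degree p + degree q" by (simp add: degree_mult_eq)
      then show ?thesis using h by (simp add: bnd_iff)
    qed
  qed
qed

lemma bnd_sum: "finite A \<Longrightarrow> (\<And>j. j \<in> A \<Longrightarrow> bnd (f j) e) \<Longrightarrow> bnd (\<Sum>j\<in>A. f j) e"
  unfolding bnd_def by (auto simp: coeff_sum)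

lemma coeff_top_mult:
  fixes p q :: "'a::idom poly"
  assumes "p \<noteq> 0" "coeff q e \<noteq> 0" "bnd q (Suc e)"
  shows "coeff (p * q) (degree p + e) = lead_coeff p * coeff q e"
proof -
  have "q \<noteq> 0" using assms(2) by auto
  then have "degree q < Suc e" using assms(3) by (simp add: bnd_iff)
  moreover have "e \<le> degree q" using assms(2) le_degree by blast
  ultimately have "degree q = e" by simp
  then show ?thesis using coeff_mult_degree_sum[of p q] by simp
qed

primrec Ap :: "(nat \<Rightarrow> nat \<Rightarrow> 'a::comm_ring_1) \<Rightarrow> nat \<Rightarrow> nat \<Rightarrow> 'a poly" where
  "Ap a m 0 = 0"
| "Ap a m (Suc n) = pCons (a (Suc n) m) (Ap a m n)"

lemma coeff_Ap: "coeff (Ap a m n) j = (if j < n then a (n - j) m else 0)"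
  by (induction n arbitrary: j) (auto simp: coeff_pCons split: nat.splits)

lemma Ap_cong: "(\<And>k. 1 \<le> k \<Longrightarrow> k \<le> n \<Longrightarrow> a k m = a' k m) \<Longrightarrow> Ap a m n = Ap a' m n"
  by (induction n) auto

definition Vv :: "(nat \<Rightarrow> nat \<Rightarrow> 'a::comm_ring_1) \<Rightarrow> nat \<Rightarrow> nat \<Rightarrow> (nat \<Rightarrow> 'a poly) \<Rightarrow> 'a poly" where
  "Vv a n m v = v 0 * Ap a m n - monom 1 n * v m"

lemma Vv_Suc: "Vv a (Suc n) m v = pCons 0 (Vv a n m v) + smult (a (Suc n) m) (v 0)"
  unfolding Vv_def
  by (simp add: monom_Suc mult_pCons_right mult_pCons_left algebra_simps)

lemma coeff_pc: "coeff (pCons 0 V + smult c f) k = (if k = 0 then 0 else coeff V (k - 1)) + c * coeff f k"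
  by (cases k) auto

lemma bnd_pc: "bnd V e \<Longrightarrow> bnd f (Suc e) \<Longrightarrow> bnd (pCons 0 V + smult c f) (Suc e)"
  unfolding bnd_def by (auto simp: coeff_pCons split: nat.splits)

lemma bnd_Suc_coeff: "bnd p (Suc e) \<Longrightarrow> coeff p e = 0 \<Longrightarrow> bnd p e"
  unfolding bnd_def by (metis le_antisym not_less_eq_eq)

lemma Vv_lin: "Vv a n m (\<lambda>i. u i - r * w i) = Vv a n m u - r * Vv a n m w"
  unfolding Vv_def by (simp add: algebra_simps)

lemma Vv_lin2: "Vv a n m (\<lambda>i. r * u i - smult c (w i)) = r * Vv a n m u - smult c (Vv a n m w)"
  unfolding Vv_def by (simp add: smult_diff_right algebra_simps)

definition P0 :: "nat \<Rightarrow> (nat\<Rightarrow>nat\<Rightarrow>'a::field) \<Rightarrow> (nat \<Rightarrow> nat) \<Rightarrow> nat \<Rightarrow> (nat \<Rightarrow> 'a poly) \<Rightarrow> bool" where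
 "P0 M a N e w \<longleftrightarrow> coeff (w 0) e = 1 \<and> bnd (w 0) (Suc e) \<and> (\<forall>m\<in>{1..M}. bnd (Vv a (N m) m w) e)"

definition Pj :: "nat \<Rightarrow> (nat\<Rightarrow>nat\<Rightarrow>'a::field) \<Rightarrow> (nat \<Rightarrow> nat) \<Rightarrow> (nat \<Rightarrow> nat \<Rightarrow> bool) \<Rightarrow> nat \<Rightarrow> nat \<Rightarrow> (nat \<Rightarrow> 'a poly) \<Rightarrow> bool" where
 "Pj M a N R j e w \<longleftrightarrow> 1 \<le> e \<and> bnd (w 0) e \<and> coeff (Vv a (N j) j w) (e - 1) \<noteq> 0 \<and>
    (\<forall>m\<in>{1..M}. bnd (Vv a (N m) m w) e \<and> (R m j \<longrightarrow> bnd (Vv a (N m) m w) (e - 1)))"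

lemma Vv_N':
  assumes "N' = N(t := Suc (N t))"
  shows "Vv a (N' t) t v = pCons 0 (Vv a (N t) t v) + smult (a (Suc (N t)) t) (v 0)"
    and "m \<noteq> t \<Longrightarrow> Vv a (N' m) m v = Vv a (N m) m v"
  using assms by (auto simp: Vv_Suc)

lemma L_other:
  assumes N': "N' = N(t := Suc (N t))" and t: "t \<in> {1..M}" and j: "j \<in> {1..M}" "j \<noteq> t"
    and P: "Pj M a N R j e w" and Rt: "R t j" and R': "\<And>m. m \<in> {1..M} \<Longrightarrow> R' m j \<Longrightarrow> m \<noteq> t \<and> R m j"
  shows "Pj M a N' R' j e w"
proof -
  have e1: "1 \<le> e" and b0: "bnd (w 0) e" using P by (auto simp: Pj_def)
  have bt: "bnd (Vv a (N t) t w) (e - 1)" using P Rt t by (auto simp: Pj_def)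
  have "bnd (Vv a (N' t) t w) e"
    using bnd_pc[OF bt, of "w 0" "a (Suc (N t)) t"] b0 e1 by (simp add: Vv_N'(1)[OF N'])
  then have "bnd (Vv a (N' m) m w) e \<and> (R' m j \<longrightarrow> bnd (Vv a (N' m) m w) (e - 1))"
    if m: "m \<in> {1..M}" for m
  proof (cases "m = t")
    case True then show ?thesis using R'[OF m] \<open>bnd (Vv a (N' t) t w) e\<close> by auto
  next
    case False
    have eq: "Vv a (N' m) m w = Vv a (N m) m w" by (rule Vv_N'(2)[OF N' False])
    show ?thesis using P m R' by (auto simp: Pj_def eq)
  qed
  moreover have "Vv a (N' j) j w = Vv a (N j) j w" by (rule Vv_N'(2)[OF N' j(2)])
  ultimately show ?thesis using P unfolding Pj_def by auto
qed

lemma L_t_stay: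
  assumes N': "N' = N(t := Suc (N t))" and t: "t \<in> {1..M}"
    and P: "Pj M a N R t e w" and irr: "\<not> R' t t"
  shows "Pj M a N' R' t (Suc e) w"
proof -
  have e1: "1 \<le> e" and b0: "bnd (w 0) e" and piv: "coeff (Vv a (N t) t w) (e - 1) \<noteq> 0"
    and bt: "bnd (Vv a (N t) t w) e"
    using P t by (auto simp: Pj_def)
  have "coeff (Vv a (N' t) t w) e = coeff (Vv a (N t) t w) (e - 1)"
    using b0 e1 by (cases e) (auto simp: Vv_N'(1)[OF N'] bnd_def)
  with piv have piv': "coeff (Vv a (N' t) t w) (Suc e - 1) \<noteq> 0" by simp
  have bt': "bnd (Vv a (N' t) t w) (Suc e)"
    using bnd_pc[OF bt, of "w 0" "a (Suc (N t)) t"] b0 by (simp add: Vv_N'(1)[OF N'] bnd_mono)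
  have "bnd (Vv a (N' m) m w) (Suc e) \<and> (R' m t \<longrightarrow> bnd (Vv a (N' m) m w) (Suc e - 1))"
    if m: "m \<in> {1..M}" for m
  proof (cases "m = t")
    case True then show ?thesis using bt' irr by simp
  next
    case False
    have eq: "Vv a (N' m) m w = Vv a (N m) m w" by (rule Vv_N'(2)[OF N' False])
    have "bnd (Vv a (N m) m w) e" using P m by (auto simp: Pj_def)
    then show ?thesis using bnd_mono[of _ e "Suc e"] by (simp add: eq)
  qed
  moreover have "bnd (w 0) (Suc e)" using b0 bnd_mono by fastforce
  ultimately show ?thesis using piv' unfolding Pj_def by auto
qed

lemma L_0_stay:
  assumes N': "N' = N(t := Suc (N t))" and t: "t \<in> {1..M}"
    and P: "P0 M a N e w" and del: "coeff (Vv a (N' t) t w) e = 0"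
  shows "P0 M a N' e w"
proof -
  have b0: "bnd (w 0) (Suc e)" and bt: "bnd (Vv a (N t) t w) e" using P t by (auto simp: P0_def)
  have "bnd (Vv a (N' t) t w) (Suc e)"
    using bnd_pc[OF bt b0] by (simp add: Vv_N'(1)[OF N'])
  then have bt': "bnd (Vv a (N' t) t w) e" using del bnd_Suc_coeff by blast
  have "bnd (Vv a (N' m) m w) e" if m: "m \<in> {1..M}" for m
  proof (cases "m = t")
    case True then show ?thesis using bt' by simp
  next
    case False
    have eq: "Vv a (N' m) m w = Vv a (N m) m w" by (rule Vv_N'(2)[OF N' False])
    show ?thesis using P m by (auto simp: P0_def eq)
  qed
  then show ?thesis using P unfolding P0_def by auto
qed

lemma Vn_bnd0:
  assumes N': "N' = N(t := Suc (N t))" and t: "t \<in> {1..M}" and P: "P0 M a N e w"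
  shows "bnd (Vv a (N' t) t w) (Suc e)"
proof -
  have b0: "bnd (w 0) (Suc e)" and bt: "bnd (Vv a (N t) t w) e" using P t by (auto simp: P0_def)
  show ?thesis using bnd_pc[OF bt b0] by (simp add: Vv_N'(1)[OF N'])
qed

lemma Vn_bndt:
  assumes N': "N' = N(t := Suc (N t))" and t: "t \<in> {1..M}" and P: "Pj M a N R t e w"
  shows "bnd (Vv a (N' t) t w) (Suc e)" and "coeff (Vv a (N' t) t w) e \<noteq> 0"
proof -
  have e1: "1 \<le> e" and b0: "bnd (w 0) e" and piv: "coeff (Vv a (N t) t w) (e - 1) \<noteq> 0"
    and bt: "bnd (Vv a (N t) t w) e"
    using P t by (auto simp: Pj_def)
  have "coeff (Vv a (N' t) t w) e = coeff (Vv a (N t) t w) (e - 1)"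
    using b0 e1 by (cases e) (auto simp: Vv_N'(1)[OF N'] bnd_def)
  with piv show "coeff (Vv a (N' t) t w) e \<noteq> 0" by simp
  show "bnd (Vv a (N' t) t w) (Suc e)"
    using bnd_pc[OF bt, of "w 0" "a (Suc (N t)) t"] b0 by (simp add: Vv_N'(1)[OF N'] bnd_mono)
qed

lemma L_0_elim:
  assumes N': "N' = N(t := Suc (N t))" and t: "t \<in> {1..M}"
    and P: "P0 M a N e0 w0" and Q: "Pj M a N R t et wt" and le: "et \<le> e0"
    and lc: "lc = coeff (Vv a (N' t) t wt) et" and dl: "\<delta> = coeff (Vv a (N' t) t w0) e0"
  shows "P0 M a N' e0 (\<lambda>i. w0 i - monom (\<delta> / lc) (e0 - et) * wt i)"
proof -
  define c where "c = \<delta> / lc"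
  define k where "k = e0 - et"
  have ke: "k + et = e0" using le by (simp add: k_def)
  have lcn: "lc \<noteq> 0" using Vn_bndt(2)[OF N' t Q] lc by simp
  have f0: "coeff (w0 0) e0 = 1" "bnd (w0 0) (Suc e0)" using P by (auto simp: P0_def)
  have ft: "bnd (wt 0) et" using Q by (auto simp: Pj_def)
  have "coeff (w0 0 - monom c k * wt 0) e0 = 1"
    using f0 ft ke by (auto simp: coeff_monom_mult bnd_def)
  moreover have "bnd (w0 0 - monom c k * wt 0) (Suc e0)"
    using bnd_diff[OF f0(2) bnd_mono[OF bnd_monom_mult[OF ft, of c k]]] ke by simp
  moreover have "bnd (Vv a (N' m) m (\<lambda>i. w0 i - monom c k * wt i)) e0" if m: "m \<in> {1..M}" for m
  proof (cases "m = t")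
    case True
    have b1: "bnd (Vv a (N' t) t w0) (Suc e0)" by (rule Vn_bnd0[OF N' t P])
    have b2: "bnd (monom c k * Vv a (N' t) t wt) (Suc e0)"
      using bnd_monom_mult[OF Vn_bndt(1)[OF N' t Q], of c k] ke by simp
    have "coeff (Vv a (N' t) t w0 - monom c k * Vv a (N' t) t wt) e0 = \<delta> - c * lc"
      using ke by (simp add: coeff_monom_mult dl lc k_def)
    also have "\<dots> = 0" using lcn by (simp add: c_def)
    finally have "coeff (Vv a (N' t) t w0 - monom c k * Vv a (N' t) t wt) e0 = 0" .
    then show ?thesis using True bnd_Suc_coeff[OF bnd_diff[OF b1 b2]] by (simp add: Vv_lin)
  next
    case False
    have b1: "bnd (Vv a (N m) m w0) e0" using P m by (auto simp: P0_def)
    have b2: "bnd (Vv a (N m) m wt) et" using Q m by (auto simp: Pj_def)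
    have b3: "bnd (monom c k * Vv a (N m) m wt) e0" using bnd_monom_mult[OF b2, of c k] ke by simp
    show ?thesis using bnd_diff[OF b1 b3] by (simp add: Vv_lin Vv_N'(2)[OF N' False])
  qed
  ultimately show ?thesis unfolding P0_def c_def k_def by auto
qed

lemma L_0_swap:
  assumes N': "N' = N(t := Suc (N t))" and t: "t \<in> {1..M}"
    and P: "P0 M a N e0 w0" and Q: "Pj M a N R t et wt" and lt: "e0 < et"
    and lc: "lc = coeff (Vv a (N' t) t wt) et" and dl: "\<delta> = coeff (Vv a (N' t) t w0) e0"
  shows "P0 M a N' et (\<lambda>i. monom 1 (et - e0) * w0 i - smult (\<delta> / lc) (wt i))"
proof -
  define c where "c = \<delta> / lc"
  define k where "k = et - e0"
  have ke: "k + e0 = et" using lt by (simp add: k_def)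
  have lcn: "lc \<noteq> 0" using Vn_bndt(2)[OF N' t Q] lc by simp
  have f0: "coeff (w0 0) e0 = 1" "bnd (w0 0) (Suc e0)" using P by (auto simp: P0_def)
  have ft: "bnd (wt 0) et" using Q by (auto simp: Pj_def)
  have "coeff (monom 1 k * w0 0 - smult c (wt 0)) et = 1"
    using f0 ft ke by (auto simp: coeff_monom_mult bnd_def)
  moreover have "bnd (monom 1 k * w0 0 - smult c (wt 0)) (Suc et)"
    using bnd_diff[OF bnd_monom_mult[OF f0(2), of 1 k] bnd_smult[OF bnd_mono[OF ft]]] ke by simp
  moreover have "bnd (Vv a (N' m) m (\<lambda>i. monom 1 k * w0 i - smult c (wt i))) et" if m: "m \<in> {1..M}" for m
  proof (cases "m = t")
    case True
    have b1: "bnd (monom 1 k * Vv a (N' t) t w0) (Suc et)"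
      using bnd_monom_mult[OF Vn_bnd0[OF N' t P], of 1 k] ke by simp
    have b2: "bnd (smult c (Vv a (N' t) t wt)) (Suc et)"
      using bnd_smult[OF Vn_bndt(1)[OF N' t Q]] by simp
    have "coeff (monom 1 k * Vv a (N' t) t w0 - smult c (Vv a (N' t) t wt)) et = \<delta> - c * lc"
      using ke lt by (simp add: coeff_monom_mult dl lc k_def)
    also have "\<dots> = 0" using lcn by (simp add: c_def)
    finally have "coeff (monom 1 k * Vv a (N' t) t w0 - smult c (Vv a (N' t) t wt)) et = 0" .
    then show ?thesis using True bnd_Suc_coeff[OF bnd_diff[OF b1 b2]] by (simp add: Vv_lin2)
  next
    case False
    have b1: "bnd (Vv a (N m) m w0) e0" using P m by (auto simp: P0_def)
    have b2: "bnd (Vv a (N m) m wt) et" using Q m by (auto simp: Pj_def)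
    have b3: "bnd (monom 1 k * Vv a (N m) m w0) et" using bnd_monom_mult[OF b1, of 1 k] ke by simp
    show ?thesis using bnd_diff[OF b3 bnd_smult[OF b2]] by (simp add: Vv_lin2 Vv_N'(2)[OF N' False])
  qed
  ultimately show ?thesis unfolding P0_def c_def k_def by auto
qed

lemma L_t_swap:
  assumes N': "N' = N(t := Suc (N t))" and t: "t \<in> {1..M}"
    and P: "P0 M a N e0 w0" and dl: "coeff (Vv a (N' t) t w0) e0 \<noteq> 0" and irr: "\<not> R' t t"
  shows "Pj M a N' R' t (Suc e0) w0"
proof -
  have b0: "bnd (w0 0) (Suc e0)" using P by (auto simp: P0_def)
  have bt: "bnd (Vv a (N' t) t w0) (Suc e0)" by (rule Vn_bnd0[OF N' t P])
  have "bnd (Vv a (N' m) m w0) (Suc e0) \<and> (R' m t \<longrightarrow> bnd (Vv a (N' m) m w0) (Suc e0 - 1))"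
    if m: "m \<in> {1..M}" for m
  proof (cases "m = t")
    case True then show ?thesis using bt irr by simp
  next
    case False
    have eq: "Vv a (N' m) m w0 = Vv a (N m) m w0" by (rule Vv_N'(2)[OF N' False])
    have "bnd (Vv a (N m) m w0) e0" using P m by (auto simp: P0_def)
    then show ?thesis using bnd_mono[of _ e0 "Suc e0"] by (simp add: eq)
  qed
  then show ?thesis using b0 dl unfolding Pj_def by auto
qed



definition spans :: "nat \<Rightarrow> (nat \<Rightarrow> nat \<Rightarrow> 'a::comm_ring_1 poly) \<Rightarrow> bool" where
  "spans M w \<longleftrightarrow> (\<forall>v. \<exists>p. \<forall>i\<le>M. v i = (\<Sum>j\<le>M. p j * w j i))"

lemma sum_two:
  assumes "finite A" "x \<in> A" "y \<in> A" "x \<noteq> y"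
  shows "sum f A = f x + f y + sum f (A - {x, y})"
proof -
  have "sum f A = f x + sum f (A - {x})" using assms by (simp add: sum.remove)
  also have "sum f (A - {x}) = f y + sum f (A - {x} - {y})"
    using assms by (intro sum.remove) auto
  moreover have "A - {x} - {y} = A - {x, y}" by auto
  ultimately show ?thesis by (simp add: add.assoc)
qed

lemma sum_two_cong:
  assumes "finite A" "x \<in> A" "y \<in> A" "x \<noteq> y" "\<And>j. j \<in> A \<Longrightarrow> j \<noteq> x \<Longrightarrow> j \<noteq> y \<Longrightarrow> f j = g j"
    and "f x + f y = g x + g y"
  shows "sum f A = sum g A"
proof -
  have "sum f (A - {x, y}) = sum g (A - {x, y})" using assms(5) by (intro sum.cong) auto
  then show ?thesis using sum_two[OF assms(1-4), of f] sum_two[OF assms(1-4), of g] assms(6) by simp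
qed

lemma span_elim:
  assumes sp: "spans M w" and t: "t \<in> {1..M}"
  shows "spans M (w(0 := (\<lambda>i. w 0 i - r * w t i)))"
  unfolding spans_def
proof
  fix v
  obtain p where p: "\<And>i. i \<le> M \<Longrightarrow> v i = (\<Sum>j\<le>M. p j * w j i)" using sp unfolding spans_def by blast
  define p' where "p' = p(t := p t + p 0 * r)"
  have "v i = (\<Sum>j\<le>M. p' j * (w(0 := (\<lambda>i. w 0 i - r * w t i))) j i)" if i: "i \<le> M" for i
  proof -
    have t0: "t \<noteq> 0" "t \<le> M" using t by auto
    have e: "p' 0 * (w 0 i - r * w t i) + p' t * w t i = p 0 * w 0 i + p t * w t i"
      using t0 by (simp add: p'_def algebra_simps)
    have "(\<Sum>j\<le>M. p' j * (w(0 := (\<lambda>i. w 0 i - r * w t i))) j i) = (\<Sum>j\<le>M. p j * w j i)"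
      by (rule sum_two_cong[of _ 0 t]) (use t0 e in \<open>auto simp: p'_def\<close>)
    then show ?thesis using p i by simp
  qed
  then show "\<exists>p. \<forall>i\<le>M. v i = (\<Sum>j\<le>M. p j * (w(0 := (\<lambda>i. w 0 i - r * w t i))) j i)" by blast
qed

lemma span_swap:
  assumes sp: "spans M w" and t: "t \<in> {1..M}" and c: "(c::'a::field) \<noteq> 0"
  shows "spans M (w(0 := (\<lambda>i. monom 1 k * w 0 i - smult c (w t i)), t := w 0))"
  unfolding spans_def
proof
  fix v
  obtain p where p: "\<And>i. i \<le> M \<Longrightarrow> v i = (\<Sum>j\<le>M. p j * w j i)" using sp unfolding spans_def by blast
  define p' where "p' = p(0 := smult (-(1/c)) (p t), t := p 0 + smult (1/c) (monom 1 k * p t))"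
  let ?w = "w(0 := (\<lambda>i. monom 1 k * w 0 i - smult c (w t i)), t := w 0)"
  have "v i = (\<Sum>j\<le>M. p' j * ?w j i)" if i: "i \<le> M" for i
  proof -
    have e: "smult (-(1/c)) (p t) * (monom 1 k * w 0 i - smult c (w t i)) + (p 0 + smult (1/c) (monom 1 k * p t)) * w 0 i
        = p 0 * w 0 i + p t * w t i"
    proof -
      have "smult (-(1/c)) (p t) * (monom 1 k * w 0 i - smult c (w t i))
          = smult (-(1/c)) (p t * monom 1 k * w 0 i) + p t * w t i"
        using c by (simp add: algebra_simps mult_smult_right mult_smult_left)
      moreover have "(p 0 + smult (1/c) (monom 1 k * p t)) * w 0 i
          = p 0 * w 0 i + smult (1/c) (p t * monom 1 k * w 0 i)"
        by (simp add: algebra_simps mult_smult_left)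
      ultimately show ?thesis by (simp add: smult_minus_left)
    qed
    have t0: "t \<noteq> 0" "t \<le> M" using t by auto
    have "(\<Sum>j\<le>M. p' j * ?w j i) = (\<Sum>j\<le>M. p j * w j i)"
      by (rule sum_two_cong[of _ 0 t]) (use t0 e in \<open>auto simp: p'_def\<close>)
    then show ?thesis using p i by simp
  qed
  then show "\<exists>p. \<forall>i\<le>M. v i = (\<Sum>j\<le>M. p j * ?w j i)" by blast
qed

lemma sum_upd: "finite A \<Longrightarrow> x \<in> A \<Longrightarrow> sum (f(x := y)) A + f x = sum f A + (y::'b::comm_monoid_add)"
proof -
  assume A: "finite A" "x \<in> A"
  have "sum (f(x := y)) A = y + sum (f(x := y)) (A - {x})" using A by (simp add: sum.remove)
  moreover have "sum (f(x := y)) (A - {x}) = sum f (A - {x})" by (intro sum.cong) auto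
  moreover have "sum f A = f x + sum f (A - {x})" using A by (simp add: sum.remove)
  ultimately show ?thesis by (simp add: algebra_simps)
qed

datatype 'a ast = AS (ncol: nat) (tt: nat) (nu: "nat \<Rightarrow> nat") (wv: "nat \<Rightarrow> nat \<Rightarrow> 'a")

definition nk :: "'a ast \<Rightarrow> nat \<Rightarrow> nat" where
  "nk st m = (if m < tt st then ncol st else ncol st - 1)"

definition key :: "nat \<Rightarrow> nat \<Rightarrow> nat \<Rightarrow> nat" where
  "key M t m = (if t \<le> m then m - t else m + Suc M - t)"

definition Rk :: "nat \<Rightarrow> nat \<Rightarrow> nat \<Rightarrow> nat \<Rightarrow> bool" where
  "Rk M t m j \<longleftrightarrow> key M t m < key M t j"

definition astep :: "nat \<Rightarrow> (nat \<Rightarrow> nat \<Rightarrow> 'a::field) \<Rightarrow> 'a poly ast \<Rightarrow> 'a poly ast" where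
"astep M a st = (if tt st \<le> M then
   (let t = tt st; n = ncol st; e0 = nu st 0; et = nu st t; w = wv st;
        \<delta> = coeff (Vv a n t (w 0)) e0; lc = coeff (Vv a n t (w t)) et in
    if \<delta> = 0 then AS n (Suc t) ((nu st)(t := Suc et)) w
    else if et \<le> e0 then AS n (Suc t) ((nu st)(t := Suc et))
          (w(0 := (\<lambda>i. w 0 i - monom (\<delta> / lc) (e0 - et) * w t i)))
    else AS n (Suc t) ((nu st)(0 := et, t := Suc e0))
          (w(0 := (\<lambda>i. monom 1 (et - e0) * w 0 i - smult (\<delta> / lc) (w t i)), t := w 0)))
  else AS (Suc (ncol st)) 1 (nu st) (wv st))"

definition init :: "nat \<Rightarrow> 'a::field poly ast" where
  "init M = AS 0 (Suc M) (\<lambda>j. if j = 0 then 0 else 1) (\<lambda>j i. if i = j then 1 else 0)"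

primrec alg :: "nat \<Rightarrow> (nat \<Rightarrow> nat \<Rightarrow> 'a::field) \<Rightarrow> nat \<Rightarrow> 'a poly ast" where
  "alg M a 0 = init M"
| "alg M a (Suc \<tau>) = astep M a (alg M a \<tau>)"

definition INV :: "nat \<Rightarrow> (nat \<Rightarrow> nat \<Rightarrow> 'a::field) \<Rightarrow> 'a poly ast \<Rightarrow> bool" where
"INV M a st \<longleftrightarrow> 1 \<le> tt st \<and> tt st \<le> Suc M \<and> (tt st \<le> M \<longrightarrow> 1 \<le> ncol st) \<and>
  P0 M a (nk st) (nu st 0) (wv st 0) \<and>
  (\<forall>j\<in>{1..M}. Pj M a (nk st) (Rk M (tt st)) j (nu st j) (wv st j)) \<and>
  (\<Sum>j\<le>M. nu st j) = (\<Sum>m=1..M. nk st m) + M \<and> spans M (wv st)"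

lemma P0_cong: "(\<And>m. m \<in> {1..M} \<Longrightarrow> N m = N' m) \<Longrightarrow> P0 M a N e w = P0 M a N' e w"
  unfolding P0_def by auto

lemma Pj_cong: "j \<in> {1..M} \<Longrightarrow> (\<And>m. m \<in> {1..M} \<Longrightarrow> N m = N' m) \<Longrightarrow> (\<And>m. m \<in> {1..M} \<Longrightarrow> R m j = R' m j)
  \<Longrightarrow> Pj M a N R j e w = Pj M a N' R' j e w"
  unfolding Pj_def by auto

lemma INV_init: "INV M a (init M)"
proof -
  have V: "Vv a 0 m v = - v m" for m and v :: "nat \<Rightarrow> 'a poly" by (simp add: Vv_def)
  have nk: "nk (init M) m = 0" for m :: nat by (simp add: nk_def init_def)
  have "P0 M a (nk (init M)) 0 (\<lambda>i. if i = 0 then 1 else 0)"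
    unfolding P0_def nk V by (auto simp: bnd_def)
  moreover have "\<forall>j\<in>{1..M}. Pj M a (nk (init M)) (Rk M (Suc M)) j 1 (\<lambda>i. if i = j then 1 else 0)"
    unfolding Rk_def Pj_def nk V by (auto simp: bnd_def)
  moreover have "spans M (\<lambda>j i. if i = j then (1::'a poly) else 0)"
    unfolding spans_def
  proof
    fix v :: "nat \<Rightarrow> 'a poly"
    have "v i = (\<Sum>j\<le>M. v j * (if i = j then 1 else 0))" if "i \<le> M" for i
      using that by (simp add: if_distrib cong: if_cong)
    then show "\<exists>p. \<forall>i\<le>M. v i = (\<Sum>j\<le>M. p j * (if i = j then 1 else 0))" by blast
  qed
  moreover have "(\<Sum>j\<le>M. (if j = 0 then 0 else 1::nat)) = M"
  proof -
    have "(\<Sum>j\<le>M. (if j = 0 then 0 else 1::nat)) = card ({..M} - {0})"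
      by (simp add: sum.If_cases Diff_eq[symmetric])
    also have "\<dots> = M" by simp
    finally show ?thesis .
  qed
  moreover have s: "tt (init M) = Suc M" "ncol (init M) = 0" "nu (init M) = (\<lambda>j. if j = 0 then 0 else 1)"
    "wv (init M) = (\<lambda>j i. if i = j then (1::'a poly) else 0)" by (simp_all add: init_def)
  ultimately show ?thesis unfolding INV_def s by (simp add: nk)
qed

lemma key_facts:
  assumes t: "t \<in> {1..M}"
  shows "\<And>j. j \<in> {1..M} \<Longrightarrow> j \<noteq> t \<Longrightarrow> Rk M t t j"
    and "\<And>m j. m \<in> {1..M} \<Longrightarrow> j \<in> {1..M} \<Longrightarrow> j \<noteq> t \<Longrightarrow> Rk M (Suc t) m j \<Longrightarrow> m \<noteq> t \<and> Rk M t m j"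
    and "\<not> Rk M (Suc t) t t"
  using t by (auto simp: Rk_def key_def split: if_splits)

lemma Rk_wrap: "m \<in> {1..M} \<Longrightarrow> j \<in> {1..M} \<Longrightarrow> Rk M 1 m j = Rk M (Suc M) m j"
  by (auto simp: Rk_def key_def)

lemma INV_step:
  assumes I: "INV M a st"
  shows "INV M a (astep M a st)"
proof (cases "tt st \<le> M")
  case False
  then have ttM: "tt st = Suc M" using I by (simp add: INV_def)
  define st' where "st' = AS (Suc (ncol st)) 1 (nu st) (wv st)"
  have st': "astep M a st = st'" using False unfolding astep_def st'_def by simp
  have nkeq: "nk st' m = nk st m" if "m \<in> {1..M}" for m
    using that ttM by (auto simp: nk_def st'_def)
  have "P0 M a (nk st) (nu st 0) (wv st 0)" using I by (simp add: INV_def)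
  then have "P0 M a (nk st') (nu st' 0) (wv st' 0)"
    using P0_cong[of M "nk st'" "nk st" a "nu st 0" "wv st 0"] nkeq by (simp add: st'_def)
  moreover have "\<forall>j\<in>{1..M}. Pj M a (nk st') (Rk M (tt st')) j (nu st' j) (wv st' j)"
  proof
    fix j assume j: "j \<in> {1..M}"
    have "Pj M a (nk st) (Rk M (tt st)) j (nu st j) (wv st j)" using I j by (simp add: INV_def)
    moreover have "Pj M a (nk st') (Rk M 1) j (nu st j) (wv st j) = Pj M a (nk st) (Rk M (Suc M)) j (nu st j) (wv st j)"
      by (rule Pj_cong[OF j]) (use nkeq Rk_wrap j in auto)
    ultimately show "Pj M a (nk st') (Rk M (tt st')) j (nu st' j) (wv st' j)"
      using ttM by (simp add: st'_def)
  qed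
  moreover have "(\<Sum>m=1..M. nk st' m) = (\<Sum>m=1..M. nk st m)" using nkeq by (intro sum.cong) auto
  ultimately show ?thesis using I unfolding st' INV_def by (simp add: st'_def)
next
  case True
  define t where "t = tt st"
  define n where "n = ncol st"
  define e0 where "e0 = nu st 0"
  define et where "et = nu st t"
  define w where "w = wv st"
  define \<delta> where "\<delta> = coeff (Vv a n t (w 0)) e0"
  define lc where "lc = coeff (Vv a n t (w t)) et"
  define N where "N = nk st"
  define N' where "N' = N(t := Suc (N t))"
  have t: "t \<in> {1..M}" using I True by (simp add: INV_def t_def)
  have n1: "1 \<le> n" using I True by (simp add: INV_def t_def n_def)
  have "N' t = Suc (n - 1)" unfolding N'_def N_def nk_def t_def n_def by simp
  then have N't: "N' t = n" using n1 by linarith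
  have nkN: "nk (AS n (Suc t) nn ww) = N'" for nn ww
  proof (rule ext)
    fix m show "nk (AS n (Suc t) nn ww) m = N' m"
    proof (cases "m = t")
      case True then show ?thesis using N't by (simp add: nk_def)
    next
      case False then show ?thesis by (auto simp: nk_def N'_def N_def t_def n_def)
    qed
  qed
  have P0: "P0 M a N e0 (w 0)" using I by (simp add: INV_def N_def e0_def w_def)
  have Pj: "\<And>j. j \<in> {1..M} \<Longrightarrow> Pj M a N (Rk M t) j (nu st j) (w j)"
    using I by (simp add: INV_def N_def w_def t_def)
  have Pt: "Pj M a N (Rk M t) t et (w t)" using Pj[OF t] by (simp add: et_def)
  have sumI: "(\<Sum>j\<le>M. nu st j) = (\<Sum>m=1..M. N m) + M" using I by (simp add: INV_def N_def)
  have spI: "spans M w" using I by (simp add: INV_def w_def)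
  have sumN': "(\<Sum>m=1..M. N' m) = Suc (\<Sum>m=1..M. N m)"
    using sum_upd[of "{1..M}" t N "Suc (N t)"] t by (simp add: N'_def)
  have dl: "\<delta> = coeff (Vv a (N' t) t (w 0)) e0" by (simp add: \<delta>_def N't)
  have lcd: "lc = coeff (Vv a (N' t) t (w t)) et" by (simp add: lc_def N't)
  have others: "Pj M a N' (Rk M (Suc t)) j (nu st j) (w j)" if j: "j \<in> {1..M}" "j \<noteq> t" for j
    by (rule L_other[OF N'_def t j Pj[OF j(1)] key_facts(1)[OF t j(1) j(2)] key_facts(2)[OF t _ j(1) j(2)]])
  have Ptstay: "Pj M a N' (Rk M (Suc t)) t (Suc et) (w t)"
    by (rule L_t_stay[OF N'_def t Pt]) (rule key_facts(3)[OF t])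
  have tM: "t \<in> {..M}" "t \<noteq> 0" using t by auto
  show ?thesis
  proof (cases "\<delta> = 0")
    case dA: True
    define st' where "st' = AS n (Suc t) ((nu st)(t := Suc et)) w"
    have st': "astep M a st = st'" using True dA
      unfolding astep_def st'_def Let_def t_def n_def e0_def et_def w_def \<delta>_def by simp
    have "P0 M a N' e0 (w 0)" by (rule L_0_stay[OF N'_def t P0]) (use dA dl in simp)
    moreover have "(\<Sum>j\<le>M. ((nu st)(t := Suc et)) j) = Suc (\<Sum>j\<le>M. nu st j)"
      using sum_upd[of "{..M}" t "nu st" "Suc et"] tM by (simp add: et_def)
    moreover have "\<forall>j\<in>{1..M}. Pj M a N' (Rk M (Suc t)) j (((nu st)(t := Suc et)) j) (w j)"
    proof
      fix j assume j: "j \<in> {1..M}"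
      show "Pj M a N' (Rk M (Suc t)) j (((nu st)(t := Suc et)) j) (w j)"
        by (cases "j = t") (use others[OF j] Ptstay in simp_all)
    qed
    moreover have "(\<Sum>j\<le>M. ((nu st)(t := Suc et)) j) = (\<Sum>m=1..M. N' m) + M"
      using calculation(2) sumI sumN' by simp
    ultimately show ?thesis unfolding st' INV_def st'_def ast.sel nkN
      using spI t n1 tM by (simp add: e0_def)
  next
    case dB: False
    show ?thesis
    proof (cases "et \<le> e0")
      case le: True
      define w' where "w' = w(0 := (\<lambda>i. w 0 i - monom (\<delta> / lc) (e0 - et) * w t i))"
      define st' where "st' = AS n (Suc t) ((nu st)(t := Suc et)) w'"
      have st': "astep M a st = st'" using True dB le
        unfolding astep_def st'_def w'_def Let_def t_def n_def e0_def et_def w_def \<delta>_def lc_def by simp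
      have "P0 M a N' e0 (w' 0)"
        using L_0_elim[OF N'_def t P0 Pt le lcd dl] by (simp add: w'_def)
      moreover have "(\<Sum>j\<le>M. ((nu st)(t := Suc et)) j) = Suc (\<Sum>j\<le>M. nu st j)"
        using sum_upd[of "{..M}" t "nu st" "Suc et"] tM by (simp add: et_def)
      moreover have "spans M w'" unfolding w'_def by (rule span_elim[OF spI t])
      moreover have "\<forall>j\<in>{1..M}. Pj M a N' (Rk M (Suc t)) j (((nu st)(t := Suc et)) j) (w' j)"
      proof
        fix j assume j: "j \<in> {1..M}"
        then have "j \<noteq> 0" by simp
        then show "Pj M a N' (Rk M (Suc t)) j (((nu st)(t := Suc et)) j) (w' j)"
          by (cases "j = t") (use others[OF j] Ptstay in \<open>simp_all add: w'_def\<close>)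
      qed
      moreover have "(\<Sum>j\<le>M. ((nu st)(t := Suc et)) j) = (\<Sum>m=1..M. N' m) + M"
        using calculation(2) sumI sumN' by simp
      ultimately show ?thesis unfolding st' INV_def st'_def ast.sel nkN
        using t n1 tM by (simp add: e0_def)
    next
      case lt: False
      then have lt: "e0 < et" by simp
      define w' where "w' = w(0 := (\<lambda>i. monom 1 (et - e0) * w 0 i - smult (\<delta> / lc) (w t i)), t := w 0)"
      define nu' where "nu' = (nu st)(0 := et, t := Suc e0)"
      define st' where "st' = AS n (Suc t) nu' w'"
      have st': "astep M a st = st'" using True dB lt
        unfolding astep_def st'_def w'_def nu'_def Let_def t_def n_def e0_def et_def w_def \<delta>_def lc_def by simp
      have lc0: "lc \<noteq> 0" using Vn_bndt(2)[OF N'_def t Pt] lcd by simp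
      have "P0 M a N' (nu' 0) (w' 0)"
        using L_0_swap[OF N'_def t P0 Pt lt lcd dl] tM by (simp add: w'_def nu'_def)
      moreover have "Pj M a N' (Rk M (Suc t)) t (nu' t) (w' t)"
        using L_t_swap[OF N'_def t P0] dB dl key_facts(3)[OF t] tM by (simp add: w'_def nu'_def)
      moreover have "Pj M a N' (Rk M (Suc t)) j (nu' j) (w' j)" if "j \<in> {1..M}" "j \<noteq> t" for j
        using others[OF that] that by (simp add: w'_def nu'_def)
      moreover have "(\<Sum>j\<le>M. nu' j) = Suc (\<Sum>j\<le>M. nu st j)"
      proof -
        have "(\<Sum>j\<le>M. ((nu st)(0 := et)) j) + e0 = (\<Sum>j\<le>M. nu st j) + et"
          using sum_upd[of "{..M}" 0 "nu st" et] by (simp add: e0_def)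
        moreover have "(\<Sum>j\<le>M. nu' j) + et = (\<Sum>j\<le>M. ((nu st)(0 := et)) j) + Suc e0"
          using sum_upd[of "{..M}" t "(nu st)(0 := et)" "Suc e0"] tM by (simp add: nu'_def et_def)
        ultimately show ?thesis by simp
      qed
      moreover have "spans M w'" unfolding w'_def
        by (rule span_swap[OF spI t]) (use dB lc0 in simp)
      ultimately have A: "P0 M a N' (nu' 0) (w' 0)" 
        "(\<Sum>j\<le>M. nu' j) = (\<Sum>m=1..M. N' m) + M" "spans M w'"
        using sumI sumN' by auto
      have B: "\<forall>j\<in>{1..M}. Pj M a N' (Rk M (Suc t)) j (nu' j) (w' j)"
      proof
        fix j assume j: "j \<in> {1..M}"
        show "Pj M a N' (Rk M (Suc t)) j (nu' j) (w' j)"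
        proof (cases "j = t")
          case True then show ?thesis using \<open>Pj M a N' (Rk M (Suc t)) t (nu' t) (w' t)\<close> by simp
        next
          case False then show ?thesis using \<open>\<And>j. j \<in> {1..M} \<Longrightarrow> j \<noteq> t \<Longrightarrow> Pj M a N' (Rk M (Suc t)) j (nu' j) (w' j)\<close> j by blast
        qed
      qed
      show ?thesis unfolding st' INV_def st'_def ast.sel nkN
        using A B t n1 tM by simp
    qed
  qed
qed

lemma INV_alg: "INV M a (alg M a \<tau>)"
  by (induction \<tau>) (auto simp: INV_init INV_step)

lemma lfsr_coeff1:
  fixes h :: "'a::comm_ring_1 poly"
  assumes hb: "bnd h (Suc L)" and k: "L < k" "k \<le> n"
  shows "coeff (h * Ap a m n) (n - k + L) = (\<Sum>i\<le>L. coeff h i * a (k - L + i) m)"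
proof -
  define e where "e = n - k + L"
  have Le: "L \<le> e" "e < n" using k by (auto simp: e_def)
  have "coeff (h * Ap a m n) e = (\<Sum>i\<le>e. coeff h i * coeff (Ap a m n) (e - i))" by (rule coeff_mult)
  also have "\<dots> = (\<Sum>i\<le>L. coeff h i * coeff (Ap a m n) (e - i))"
    by (rule sum.mono_neutral_right) (use Le hb in \<open>auto simp: bnd_def\<close>)
  also have "\<dots> = (\<Sum>i\<le>L. coeff h i * a (k - L + i) m)"
  proof (rule sum.cong)
    fix i assume i: "i \<in> {..L}"
    have "e - i < n" using Le by linarith
    moreover have "n - (e - i) = k - L + i" using i k Le unfolding e_def by auto
    ultimately show "coeff h i * coeff (Ap a m n) (e - i) = coeff h i * a (k - L + i) m"
      by (simp add: coeff_Ap)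
  qed simp
  finally show ?thesis by (simp add: e_def)
qed

lemma lfsr_coeff2:
  fixes h :: "'a::comm_ring_1 poly"
  assumes hL: "coeff h L = 1" and k: "L < k"
  shows "(\<Sum>i\<le>L. coeff h i * a (k - L + i) m) = a k m + (\<Sum>r=1..L. coeff h (L - r) * a (k - r) m)"
proof -
  have "(\<Sum>i\<le>L. coeff h i * a (k - L + i) m) = coeff h L * a (k - L + L) m + (\<Sum>i<L. coeff h i * a (k - L + i) m)"
    by (simp add: lessThan_Suc_atMost[symmetric])
  moreover have "(\<Sum>i<L. coeff h i * a (k - L + i) m) = (\<Sum>r=1..L. coeff h (L - r) * a (k - r) m)"
    by (rule sum.reindex_bij_witness[where i="\<lambda>r. L - r" and j="\<lambda>i. L - i"]) (use k in auto)
  ultimately show ?thesis using hL k by simp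
qed

lemma Vv_coeff_low: "e < n \<Longrightarrow> coeff (Vv a n m v) e = coeff (v 0 * Ap a m n) e"
  by (simp add: Vv_def coeff_monom_mult)

lemma upper_lfsr:
  fixes v :: "nat \<Rightarrow> 'a::field poly"
  assumes hL: "coeff (v 0) L = 1" and hb: "bnd (v 0) (Suc L)" and Vb: "bnd (Vv a n m v) L"
    and k: "L < k" "k \<le> n"
  shows "a k m = (\<Sum>i=1..L. (- coeff (v 0) (L - i)) * a (k - i) m)"
proof -
  have "coeff (Vv a n m v) (n - k + L) = 0" using Vb k by (simp add: bnd_def)
  moreover have "n - k + L < n" using k by simp
  ultimately have "coeff (v 0 * Ap a m n) (n - k + L) = 0" by (simp add: Vv_coeff_low)
  then have "a k m + (\<Sum>r=1..L. coeff (v 0) (L - r) * a (k - r) m) = 0"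
    using lfsr_coeff1[OF hb k, of a m] lfsr_coeff2[OF hL k(1), of a m] by simp
  then show ?thesis by (simp add: sum_negf eq_neg_iff_add_eq_0)
qed

lemma Vv_span:
  assumes p: "\<forall>i\<le>M. v i = (\<Sum>j\<le>M. p j * w j i)" and m: "m \<le> M"
  shows "Vv a n m v = (\<Sum>j\<le>M. p j * Vv a n m (w j))"
proof -
  have "Vv a n m v = (\<Sum>j\<le>M. p j * w j 0) * Ap a m n - monom 1 n * (\<Sum>j\<le>M. p j * w j m)"
    using p m by (simp add: Vv_def)
  also have "\<dots> = (\<Sum>j\<le>M. p j * Vv a n m (w j))"
    by (simp add: Vv_def sum_distrib_left sum_distrib_right sum_subtractf algebra_simps)
  finally show ?thesis .
qed

lemma key_inj: "t \<in> {1..Suc M} \<Longrightarrow> m \<in> {1..M} \<Longrightarrow> j \<in> {1..M} \<Longrightarrow> key M t m = key M t j \<Longrightarrow> m = j"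
  by (auto simp: key_def split: if_splits)

lemma bnd_coeff0: "bnd p e \<Longrightarrow> e \<le> k \<Longrightarrow> coeff p k = 0"
  unfolding bnd_def by auto

lemma lower_bound:
  fixes v :: "nat \<Rightarrow> 'a::field poly"
  assumes I: "INV M a st" and hL: "coeff (v 0) L = 1" and hb: "bnd (v 0) (Suc L)"
    and Vb: "\<forall>m\<in>{1..M}. bnd (Vv a (nk st m) m v) L"
  shows "nu st 0 \<le> L"
proof -
  define w where "w = wv st"
  define \<nu> where "\<nu> = nu st"
  define N where "N = nk st"
  define R where "R = Rk M (tt st)"
  have tt: "tt st \<in> {1..Suc M}" using I by (simp add: INV_def)
  have P0: "coeff (w 0 0) (\<nu> 0) = 1" "bnd (w 0 0) (Suc (\<nu> 0))" "\<And>m. m \<in> {1..M} \<Longrightarrow> bnd (Vv a (N m) m (w 0)) (\<nu> 0)"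
    using I by (auto simp: INV_def P0_def w_def \<nu>_def N_def)
  have Pj: "\<And>j. j \<in> {1..M} \<Longrightarrow> 1 \<le> \<nu> j \<and> bnd (w j 0) (\<nu> j) \<and> coeff (Vv a (N j) j (w j)) (\<nu> j - 1) \<noteq> 0 \<and>
    (\<forall>m\<in>{1..M}. bnd (Vv a (N m) m (w j)) (\<nu> j) \<and> (R m j \<longrightarrow> bnd (Vv a (N m) m (w j)) (\<nu> j - 1)))"
    using I unfolding INV_def Pj_def w_def \<nu>_def N_def R_def by blast
  obtain p where p: "\<forall>i\<le>M. v i = (\<Sum>j\<le>M. p j * w j i)"
    using I unfolding INV_def spans_def w_def by blast
  define S where "S = {j \<in> {..M}. p j \<noteq> 0}"
  have finS: "finite S" by (simp add: S_def)
  have v0: "v 0 = (\<Sum>j\<le>M. p j * w j 0)" using p by simp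
  have "S \<noteq> {}"
  proof
    assume "S = {}"
    then have "\<forall>j\<le>M. p j = 0" by (auto simp: S_def)
    then have "v 0 = 0" using v0 by simp
    then show False using hL by simp
  qed
  define D where "D = Max ((\<lambda>j. degree (p j) + \<nu> j) ` S)"
  have Dge: "\<And>j. j \<in> S \<Longrightarrow> degree (p j) + \<nu> j \<le> D" unfolding D_def using finS by simp
  define J where "J = {j \<in> S. degree (p j) + \<nu> j = D}"
  have "D \<in> (\<lambda>j. degree (p j) + \<nu> j) ` S" unfolding D_def using finS \<open>S \<noteq> {}\<close> by (intro Max_in) auto
  then have "J \<noteq> {}" by (auto simp: J_def)
  have finJ: "finite J" using finS by (simp add: J_def)
  define r where "r j = (if j = 0 then 0 else Suc (key M (tt st) j))" for j
  obtain js where js: "js \<in> J" "\<And>j. j \<in> J \<Longrightarrow> r js \<le> r j"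
  proof -
    have "Min (r ` J) \<in> r ` J" using finJ \<open>J \<noteq> {}\<close> by (intro Min_in) auto
    then obtain js where "js \<in> J" "r js = Min (r ` J)" by auto
    moreover have "\<And>j. j \<in> J \<Longrightarrow> Min (r ` J) \<le> r j" using finJ by simp
    ultimately show ?thesis using that by metis
  qed
  have JM: "\<And>j. j \<in> J \<Longrightarrow> j \<le> M \<and> p j \<noteq> 0 \<and> degree (p j) + \<nu> j = D" by (auto simp: J_def S_def)
  have uniq: "js = 0 \<or> (j \<noteq> 0 \<and> R js j)" if j: "j \<in> J" "j \<noteq> js" for j
  proof (cases "js = 0")
    case False
    have "j \<noteq> 0"
    proof
      assume "j = 0" then have "r js \<le> 0" using js(2)[OF j(1)] by (simp add: r_def)
      then show False using False by (simp add: r_def)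
    qed
    have "r js \<le> r j" using js(2)[OF j(1)] .
    then have "key M (tt st) js \<le> key M (tt st) j" using False \<open>j \<noteq> 0\<close> by (simp add: r_def)
    moreover have "key M (tt st) js \<noteq> key M (tt st) j"
      using key_inj[OF tt, of js j] JM[OF js(1)] JM[OF j(1)] False \<open>j \<noteq> 0\<close> j(2) by auto
    ultimately show ?thesis using \<open>j \<noteq> 0\<close> by (simp add: R_def Rk_def)
  qed simp
  show ?thesis
  proof (cases "js = 0")
    case True
    have p0: "p 0 \<noteq> 0" "D = degree (p 0) + \<nu> 0" using JM[OF js(1)] True by auto
    have c0: "coeff (p 0 * w 0 0) D = lead_coeff (p 0)"
      using coeff_top_mult[OF p0(1), of "w 0 0" "\<nu> 0"] P0 p0 by simp
    have cj: "coeff (p j * w j 0) D = 0" if j: "j \<in> {..M} - {0}" for j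
    proof (cases "p j = 0")
      case False
      then have "j \<in> S" using j by (simp add: S_def)
      have "bnd (w j 0) (\<nu> j)" using Pj[of j] j by auto
      then have "bnd (p j * w j 0) (degree (p j) + \<nu> j)" by (rule bnd_mult)
      then show ?thesis using Dge[OF \<open>j \<in> S\<close>] by (simp add: bnd_coeff0)
    qed simp
    have "coeff (v 0) D = (\<Sum>j\<le>M. coeff (p j * w j 0) D)" using v0 by (simp add: coeff_sum)
    also have "\<dots> = coeff (p 0 * w 0 0) D + (\<Sum>j\<in>{..M} - {0}. coeff (p j * w j 0) D)"
      by (rule sum.remove) auto
    also have "\<dots> = lead_coeff (p 0)" using c0 cj by simp
    finally have "coeff (v 0) D \<noteq> 0" using p0 by simp
    then have "D \<le> L" using hb by (meson bnd_coeff0 not_less_eq_eq)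
    then show ?thesis using p0 by (simp add: \<nu>_def)
  next
    case False
    have jsM: "js \<in> {1..M}" using JM[OF js(1)] False by auto
    have pjs: "p js \<noteq> 0" "D = degree (p js) + \<nu> js" using JM[OF js(1)] by auto
    have Pjs: "1 \<le> \<nu> js" "coeff (Vv a (N js) js (w js)) (\<nu> js - 1) \<noteq> 0" "bnd (Vv a (N js) js (w js)) (Suc (\<nu> js - 1))"
      using Pj[OF jsM] jsM by auto
    define Vj where "Vj = Vv a (N js) js"
    have cjs: "coeff (p js * Vj (w js)) (D - 1) \<noteq> 0"
      using coeff_top_mult[OF pjs(1) Pjs(2) Pjs(3)] pjs Pjs(1) Pjs(2) by (simp add: Vj_def)
    have cj: "coeff (p j * Vj (w j)) (D - 1) = 0" if j: "j \<in> {..M} - {js}" for j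
    proof (cases "p j = 0")
      case False
      then have "j \<in> S" using j by (simp add: S_def)
      show ?thesis
      proof (cases "j \<in> J")
        case True
        then have "j \<noteq> 0" "R js j" using uniq[OF True] j \<open>js \<noteq> 0\<close> by auto
        then have jM: "j \<in> {1..M}" using j by auto
        have "bnd (Vj (w j)) (\<nu> j - 1)" using Pj[OF jM] jsM \<open>R js j\<close> by (auto simp: Vj_def)
        then have "bnd (p j * Vj (w j)) (degree (p j) + (\<nu> j - 1))" by (rule bnd_mult)
        moreover have "degree (p j) + (\<nu> j - 1) = D - 1" using JM[OF True] Pj[OF jM] by auto
        ultimately show ?thesis by (simp add: bnd_coeff0)
      next
        case nJ: False
        then have lt: "degree (p j) + \<nu> j < D" using Dge[OF \<open>j \<in> S\<close>] by (auto simp: J_def \<open>j \<in> S\<close>)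
        have "bnd (Vj (w j)) (\<nu> j)"
        proof (cases "j = 0")
          case True then show ?thesis using P0(3)[OF jsM] by (simp add: Vj_def)
        next
          case False then have "j \<in> {1..M}" using j by auto
          then show ?thesis using Pj jsM by (auto simp: Vj_def)
        qed
        then have "bnd (p j * Vj (w j)) (degree (p j) + \<nu> j)" by (rule bnd_mult)
        then show ?thesis using lt by (simp add: bnd_coeff0)
      qed
    qed simp
    have "coeff (Vj v) (D - 1) = (\<Sum>j\<le>M. coeff (p j * Vj (w j)) (D - 1))"
      using Vv_span[OF p, of js a "N js"] jsM by (simp add: Vj_def coeff_sum)
    also have "\<dots> = coeff (p js * Vj (w js)) (D - 1) + (\<Sum>j\<in>{..M} - {js}. coeff (p j * Vj (w j)) (D - 1))"
      using jsM by (intro sum.remove) auto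
    also have "\<dots> = coeff (p js * Vj (w js)) (D - 1)" using cj by simp
    finally have "coeff (Vj v) (D - 1) \<noteq> 0" using cjs by simp
    moreover have "bnd (Vj v) L" using Vb jsM by (simp add: Vj_def N_def)
    ultimately have DL: "D - 1 < L" by (meson bnd_coeff0 not_less)
    have D1: "1 \<le> D" using pjs Pjs(1) by simp
    have "bnd (p j * w j 0) D" if j: "j \<in> {..M}" for j
    proof (cases "p j = 0")
      case False
      then have "j \<in> S" using j by (simp add: S_def)
      show ?thesis
      proof (cases "j = 0")
        case True
        have "j \<notin> J" using uniq[of j] True \<open>js \<noteq> 0\<close> by auto
        then have "degree (p j) + \<nu> j < D" using Dge[OF \<open>j \<in> S\<close>] \<open>j \<in> S\<close> by (auto simp: J_def)
        moreover have "bnd (p j * w j 0) (degree (p j) + Suc (\<nu> j))" using bnd_mult[OF P0(2)] True by simp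
        ultimately show ?thesis by (auto intro: bnd_mono)
      next
        case False
        then have "j \<in> {1..M}" using j by auto
        then have "bnd (p j * w j 0) (degree (p j) + \<nu> j)" using Pj by (auto intro: bnd_mult)
        then show ?thesis using Dge[OF \<open>j \<in> S\<close>] by (auto intro: bnd_mono)
      qed
    qed simp
    then have "bnd (v 0) D" unfolding v0 by (intro bnd_sum) auto
    then have "coeff (v 0) L = 0" using DL D1 by (simp add: bnd_coeff0)
    then show ?thesis using hL by simp
  qed
qed

definition hpoly :: "nat \<Rightarrow> (nat \<Rightarrow> 'a::comm_ring_1) \<Rightarrow> 'a poly" where
  "hpoly L c = monom 1 L - (\<Sum>i=1..L. monom (c i) (L - i))"

lemma coeff_hpoly: "coeff (hpoly L c) j = (if j = L then 1 else if j < L then - c (L - j) else 0)"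
proof -
  have "coeff (\<Sum>i=1..L. monom (c i) (L - i)) j = (\<Sum>i=1..L. (if i = L - j \<and> j < L then c i else 0))"
    unfolding coeff_sum coeff_monom by (intro sum.cong) auto
  also have "\<dots> = (if j < L then c (L - j) else 0)"
    by (cases "j < L") (simp_all add: sum.delta)
  finally show ?thesis by (auto simp: hpoly_def coeff_monom)
qed

lemma hpoly_props: "coeff (hpoly L c) L = 1" "bnd (hpoly L c) (Suc L)"
  by (auto simp: coeff_hpoly bnd_def)

lemma lin_compl_alg:
  fixes a :: "nat \<Rightarrow> nat \<Rightarrow> 'a::field"
  assumes I: "INV M a st" and ttM: "tt st = Suc M"
  shows "lin_compl M a (ncol st) = nu st 0"
proof -
  define n where "n = ncol st"
  have Nn: "\<And>m. m \<in> {1..M} \<Longrightarrow> nk st m = n" using ttM by (auto simp: nk_def n_def)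
  have P0: "coeff (wv st 0 0) (nu st 0) = 1" "bnd (wv st 0 0) (Suc (nu st 0))"
    "\<And>m. m \<in> {1..M} \<Longrightarrow> bnd (Vv a n m (wv st 0)) (nu st 0)"
    using I Nn by (auto simp: INV_def P0_def)
  let ?P = "\<lambda>L. \<exists>c :: nat \<Rightarrow> 'a. \<forall>k m. L < k \<and> k \<le> n \<and> 1 \<le> m \<and> m \<le> M \<longrightarrow>
        a k m = (\<Sum>i=1..L. c i * a (k - i) m)"
  have "?P (nu st 0)"
  proof (intro exI allI impI)
    fix k m assume km: "nu st 0 < k \<and> k \<le> n \<and> 1 \<le> m \<and> m \<le> M"
    then show "a k m = (\<Sum>i=1..nu st 0. (- coeff (wv st 0 0) (nu st 0 - i)) * a (k - i) m)"
      using upper_lfsr[OF P0(1) P0(2) P0(3)] by auto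
  qed
  moreover have "nu st 0 \<le> L" if "?P L" for L
  proof -
    obtain c where c: "\<And>k m. L < k \<Longrightarrow> k \<le> n \<Longrightarrow> 1 \<le> m \<Longrightarrow> m \<le> M \<Longrightarrow> a k m = (\<Sum>i=1..L. c i * a (k - i) m)"
      using \<open>?P L\<close> by blast
    define h where "h = hpoly L c"
    define v where "v i = (if i = 0 then h else poly_shift n (h * Ap a i n))" for i
    have v0: "v 0 = h" by (simp add: v_def)
    have "bnd (Vv a (nk st m) m v) L" if m: "m \<in> {1..M}" for m
      unfolding bnd_def
    proof (intro allI impI)
      fix e assume e: "L \<le> e"
      have vm: "v m = poly_shift n (h * Ap a m n)" using m by (simp add: v_def)
      show "coeff (Vv a (nk st m) m v) e = 0"
      proof (cases "e < n")
        case True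
        define k where "k = n - e + L"
        have k: "L < k" "k \<le> n" "e = n - k + L" using True e by (auto simp: k_def)
        have "coeff (Vv a (nk st m) m v) e = coeff (h * Ap a m n) (n - k + L)"
          using True k Nn[OF m] v0 by (simp add: Vv_coeff_low)
        also have "\<dots> = a k m + (\<Sum>r=1..L. coeff h (L - r) * a (k - r) m)"
          using lfsr_coeff1[OF hpoly_props(2) k(1,2), of c a m] lfsr_coeff2[OF hpoly_props(1) k(1), of c a m]
          by (simp add: h_def)
        also have "(\<Sum>r=1..L. coeff h (L - r) * a (k - r) m) = - (\<Sum>r=1..L. c r * a (k - r) m)"
          unfolding sum_negf[symmetric] by (intro sum.cong) (auto simp: h_def coeff_hpoly)
        also have "a k m = (\<Sum>r=1..L. c r * a (k - r) m)" using c[OF k(1,2)] m by auto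
        finally show ?thesis by simp
      next
        case False
        then show ?thesis using Nn[OF m] vm v0
          by (simp add: Vv_def coeff_monom_mult coeff_poly_shift)
      qed
    qed
    then show ?thesis using lower_bound[OF I, of v L] v0 hpoly_props[of L c] by (simp add: h_def)
  qed
  ultimately show ?thesis unfolding lin_compl_def n_def[symmetric] by (intro Least_equality) auto
qed

definition proj :: "nat \<Rightarrow> 'a poly ast \<Rightarrow> bdm_state" where
  "proj M st = (map (\<lambda>m. int (nu st m) - int (nk st m) - 1 + int (ncol st div Suc M)) [1..<Suc M],
     int (nu st 0) - int (ncol st - ncol st div Suc M), int (ncol st mod Suc M), tt st)"

lemma bern_uniform:
  fixes \<delta>0 :: "'a::{finite,field}"
  shows "map_pmf (\<lambda>x. \<delta>0 + x = 0) (pmf_of_set UNIV) = bernoulli_pmf (1 / real CARD('a))"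
proof (rule pmf_eqI)
  fix b :: bool
  have q: "CARD('a) \<ge> 1" by (simp add: Suc_leI)
  have eq: "{x::'a. \<delta>0 + x = 0} = {- \<delta>0}" by (auto simp: add_eq_0_iff)
  have neq: "{x::'a. \<delta>0 + x \<noteq> 0} = UNIV - {- \<delta>0}" by (auto simp: add_eq_0_iff)
  show "pmf (map_pmf (\<lambda>x. \<delta>0 + x = 0) (pmf_of_set UNIV)) b = pmf (bernoulli_pmf (1 / real CARD('a))) b"
  proof (cases b)
    case True
    have "pmf (map_pmf (\<lambda>x. \<delta>0 + x = 0) (pmf_of_set UNIV)) b = card {x::'a. \<delta>0 + x = 0} / CARD('a)"
      using True by (simp add: pmf_map measure_pmf_of_set vimage_def)
    then show ?thesis using True q eq by simp
  next
    case False
    have "pmf (map_pmf (\<lambda>x. \<delta>0 + x = 0) (pmf_of_set UNIV)) b = card {x::'a. \<delta>0 + x \<noteq> 0} / CARD('a)"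
      using False by (simp add: pmf_map measure_pmf_of_set vimage_def)
    also have "\<dots> = (real CARD('a) - 1) / CARD('a)" using q by (simp add: neq card_Diff_subset of_nat_diff)
    also have "\<dots> = 1 - 1 / real CARD('a)" using q by (simp add: field_simps)
    finally show ?thesis using False q by simp
  qed
qed

lemma astep_time:
  "ncol (astep M a st) = (if tt st \<le> M then ncol st else Suc (ncol st))"
  "tt (astep M a st) = (if tt st \<le> M then Suc (tt st) else 1)"
  unfolding astep_def Let_def by auto

lemma astep_nu_cases:
  assumes "tt st \<le> M"
  shows "nu (astep M a st) = (if coeff (Vv a (ncol st) (tt st) (wv st 0)) (nu st 0) \<noteq> 0 \<and> nu st 0 < nu st (tt st)
     then (nu st)(0 := nu st (tt st), tt st := Suc (nu st 0)) else (nu st)(tt st := Suc (nu st (tt st))))"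
  using assms unfolding astep_def Let_def by auto

lemma loc_step:
  fixes a :: "nat \<Rightarrow> nat \<Rightarrow> 'a::{finite,field}"
  assumes I: "INV M a st" and tM: "tt st \<le> M"
  shows "map_pmf (\<lambda>x. proj M (astep M (a(ncol st := (a (ncol st))(tt st := x))) st)) (pmf_of_set UNIV)
       = bdm_step CARD('a) M (proj M st)"
proof -
  define t where "t = tt st"
  define n where "n = ncol st"
  define e0 where "e0 = nu st 0"
  define et where "et = nu st t"
  define Q where "Q = n div Suc M"
  define ax where "ax x = a(n := (a n)(t := x))" for x
  have t: "1 \<le> t" "t \<le> M" using I tM by (auto simp: INV_def t_def)
  have n1: "1 \<le> n" using I tM by (auto simp: INV_def n_def)
  have f0: "coeff (wv st 0 0) e0 = 1" using I by (simp add: INV_def P0_def e0_def)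
  define V0 where "V0 = Vv a (n - 1) t (wv st 0)"
  define \<delta>0 where "\<delta>0 = coeff (pCons 0 V0) e0"
  have \<delta>: "coeff (Vv (ax x) n t (wv st 0)) e0 = \<delta>0 + x" for x
  proof -
    have "Ap (ax x) t (n - 1) = Ap a t (n - 1)" by (rule Ap_cong) (auto simp: ax_def)
    then have V0': "Vv (ax x) (n - 1) t (wv st 0) = V0" by (simp add: V0_def Vv_def)
    have sn: "Suc (n - 1) = n" using n1 by simp
    have "Vv (ax x) (Suc (n - 1)) t (wv st 0) = pCons 0 (Vv (ax x) (n - 1) t (wv st 0)) + smult (ax x (Suc (n - 1)) t) (wv st 0 0)"
      by (rule Vv_Suc)
    then have "Vv (ax x) n t (wv st 0) = pCons 0 V0 + smult x (wv st 0 0)"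
      unfolding sn V0' by (simp add: ax_def)
    then show ?thesis using f0 by (simp add: \<delta>0_def)
  qed
  have nkst: "nk st m = (if m < t then n else n - 1)" for m by (simp add: nk_def t_def n_def)
  obtain b d T where bdT: "proj M st = (b, d, T, t)" by (simp add: proj_def t_def)
  have b: "b = map (\<lambda>m. int (nu st m) - int (nk st m) - 1 + int Q) [1..<Suc M]"
    and d: "d = int e0 - int (n - Q)" and T: "T = int (n mod Suc M)"
    using bdT by (simp_all add: proj_def Q_def n_def e0_def)
  have bt: "b ! (t - 1) = int et - int (n - 1) - 1 + int Q"
    using t by (simp add: b nth_map_upt et_def nkst del: upt_Suc)
  have Qn: "Q \<le> n" by (simp add: Q_def)
  have bt': "b ! (t - 1) = int et - (int n - int Q)" using bt n1 by (simp add: of_nat_diff)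
  have bt'': "int et - (int n - int (n div Suc M)) = b ! (t - Suc 0)" using bt' by (simp add: Q_def)
  define sA where "sA = (b, d, T, Suc t)"
  define sC where "sC = (b[t - 1 := d], b ! (t - 1), T, Suc t)"
  have stepA: "proj M (astep M (ax x) st) = sA" if "\<not> (\<delta>0 + x \<noteq> 0 \<and> e0 < et)" for x
  proof -
    have c: "\<not> (coeff (Vv (ax x) (ncol st) (tt st) (wv st 0)) (nu st 0) \<noteq> 0 \<and> nu st 0 < nu st (tt st))"
      using that \<delta>[of x] by (simp add: t_def n_def e0_def et_def)
    have nu': "nu (astep M (ax x) st) = (nu st)(t := Suc et)"
      unfolding astep_nu_cases[OF tM, of "ax x"] if_not_P[OF c] by (simp add: t_def et_def)
    have "map (\<lambda>m. int (((nu st)(t := Suc et)) m) - int (if m < Suc t then n else n - 1) - 1 + int Q) [1..<Suc M] = b"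
      unfolding b using n1 by (intro map_cong) (auto simp: nkst et_def less_Suc_eq simp del: upt_Suc)
    moreover have s: "ncol (astep M (ax x) st) = n" "tt (astep M (ax x) st) = Suc t"
      using tM by (simp_all add: astep_time n_def t_def)
    ultimately show ?thesis unfolding proj_def nk_def s nu' using t
      by (simp add: sA_def d T Q_def e0_def del: upt_Suc)
  qed
  have stepC: "proj M (astep M (ax x) st) = sC" if "\<delta>0 + x \<noteq> 0" "e0 < et" for x
  proof -
    have c: "coeff (Vv (ax x) (ncol st) (tt st) (wv st 0)) (nu st 0) \<noteq> 0 \<and> nu st 0 < nu st (tt st)"
      using that \<delta>[of x] by (simp add: t_def n_def e0_def et_def)
    have nu': "nu (astep M (ax x) st) = (nu st)(0 := et, t := Suc e0)"
      unfolding astep_nu_cases[OF tM, of "ax x"] if_P[OF c] by (simp add: t_def et_def e0_def)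
    have "map (\<lambda>m. int (((nu st)(0 := et, t := Suc e0)) m) - int (if m < Suc t then n else n - 1) - 1 + int Q) [1..<Suc M] = b[t - 1 := d]"
    proof (rule nth_equalityI)
      fix i assume "i < length (map (\<lambda>m. int (((nu st)(0 := et, t := Suc e0)) m) - int (if m < Suc t then n else n - 1) - 1 + int Q) [1..<Suc M])"
      then have i: "i < M" by (simp del: upt_Suc)
      show "map (\<lambda>m. int (((nu st)(0 := et, t := Suc e0)) m) - int (if m < Suc t then n else n - 1) - 1 + int Q) [1..<Suc M] ! i = b[t - 1 := d] ! i"
        using i t n1 Qn by (auto simp: b nth_map_upt nkst d nth_list_update simp del: upt_Suc)
    qed (simp add: b del: upt_Suc)
    moreover have s: "ncol (astep M (ax x) st) = n" "tt (astep M (ax x) st) = Suc t"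
      using tM by (simp_all add: astep_time n_def t_def)
    ultimately show ?thesis unfolding proj_def nk_def s nu' using t n1 Qn
      by (simp add: sC_def d T Q_def e0_def bt'' del: upt_Suc)
  qed
  have cond: "(b ! (t - 1) > d) \<longleftrightarrow> e0 < et" using bt d n1 Qn by auto
  show ?thesis
  proof (cases "e0 < et")
    case False
    then have "(\<lambda>x. proj M (astep M (ax x) st)) = (\<lambda>x. sA)" using stepA by auto
    moreover have "bdm_step CARD('a) M (proj M st) = return_pmf sA"
      using False cond t unfolding sA_def Suc_eq_plus1[of t] by (simp add: bdT bdm_step_def)
    ultimately show ?thesis by (simp add: ax_def t_def n_def)
  next
    case True
    then have "(\<lambda>x. proj M (astep M (ax x) st)) = (\<lambda>x. if \<delta>0 + x = 0 then sA else sC)"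
      using stepA stepC by auto
    then have "map_pmf (\<lambda>x. proj M (astep M (ax x) st)) (pmf_of_set UNIV)
        = map_pmf (\<lambda>c. if c then sA else sC) (map_pmf (\<lambda>x. \<delta>0 + x = 0) (pmf_of_set UNIV))"
      by (simp add: pmf.map_comp o_def)
    also have "\<dots> = map_pmf (\<lambda>c. if c then sA else sC) (bernoulli_pmf (1 / real CARD('a)))"
      by (simp add: bern_uniform)
    also have "\<dots> = bdm_step CARD('a) M (proj M st)"
      using True cond t unfolding sA_def sC_def Suc_eq_plus1[of t] by (simp add: bdT bdm_step_def)
    finally show ?thesis by (simp add: ax_def t_def n_def)
  qed
qed

lemma wrap_step:
  fixes a :: "nat \<Rightarrow> nat \<Rightarrow> 'a::field"
  assumes ttM: "tt st = Suc M"
  shows "bdm_step q M (proj M st) = return_pmf (proj M (astep M a st))"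
proof -
  define n where "n = ncol st"
  define Q where "Q = n div Suc M"
  have st': "astep M a st = AS (Suc n) 1 (nu st) (wv st)" using ttM by (simp add: astep_def n_def)
  have nk: "nk st m = n" if "m \<le> M" for m using that ttM by (simp add: nk_def n_def)
  have nk': "nk (AS (Suc n) 1 (nu st) (wv st)) m = n" if "1 \<le> m" for m using that by (simp add: nk_def)
  have Qn: "Q \<le> n" by (simp add: Q_def)
  have mapeq: "map f [1..<Suc M] = map g [1..<Suc M]" if "\<And>m. 1 \<le> m \<Longrightarrow> m \<le> M \<Longrightarrow> f m = g m" for f g :: "nat \<Rightarrow> int"
    using that by (intro map_cong) auto
  show ?thesis
  proof (cases "n mod Suc M = M")
    case False
    then have "n mod Suc M < M" using mod_less_divisor[of "Suc M" n] by linarith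
    then have dm: "Suc n div Suc M = Q" "Suc n mod Suc M = Suc (n mod Suc M)"
      using False by (simp_all add: div_Suc mod_Suc Q_def)
    have "map (\<lambda>m. int (nu st m) - int (nk (AS (Suc n) 1 (nu st) (wv st)) m) - 1 + int Q) [1..<Suc M]
        = map (\<lambda>m. int (nu st m) - int (nk st m) - 1 + int Q) [1..<Suc M]"
      by (rule mapeq) (simp add: nk_def ttM n_def)
    then show ?thesis using \<open>n mod Suc M < M\<close> ttM Qn
      unfolding st' proj_def by (simp add: dm bdm_step_def n_def[symmetric] Q_def[symmetric] of_nat_diff del: upt_Suc)
  next
    case True
    then have dm: "Suc n div Suc M = Suc Q" "Suc n mod Suc M = 0"
      by (simp_all add: div_Suc mod_Suc Q_def)
    have "map (\<lambda>m. int (nu st m) - int (nk (AS (Suc n) 1 (nu st) (wv st)) m) - 1 + int (Suc Q)) [1..<Suc M]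
        = map (\<lambda>x. x + 1) (map (\<lambda>m. int (nu st m) - int (nk st m) - 1 + int Q) [1..<Suc M])"
      unfolding map_map o_def by (rule mapeq) (simp add: nk_def ttM n_def)
    then show ?thesis using True ttM Qn
      unfolding st' proj_def by (simp add: dm bdm_step_def n_def[symmetric] Q_def[symmetric] of_nat_diff del: upt_Suc)
  qed
qed

lemma alg_time_indep:
  fixes a :: "nat \<Rightarrow> nat \<Rightarrow> 'a::field" and a' :: "nat \<Rightarrow> nat \<Rightarrow> 'b::field"
  shows "ncol (alg M a \<tau>) = ncol (alg M a' \<tau>) \<and> tt (alg M a \<tau>) = tt (alg M a' \<tau>)"
  by (induction \<tau>) (simp_all add: astep_time init_def)

definition tcol :: "nat \<Rightarrow> nat \<Rightarrow> nat" where
  "tcol M \<tau> = ncol (alg M (\<lambda>_ _. 0::real) \<tau>)"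
definition ttt :: "nat \<Rightarrow> nat \<Rightarrow> nat" where
  "ttt M \<tau> = tt (alg M (\<lambda>_ _. 0::real) \<tau>)"

lemma alg_time:
  fixes a :: "nat \<Rightarrow> nat \<Rightarrow> 'a::field"
  shows "ncol (alg M a \<tau>) = tcol M \<tau>" "tt (alg M a \<tau>) = ttt M \<tau>"
  using alg_time_indep[of M a \<tau> "\<lambda>_ _. 0::real"] by (simp_all add: tcol_def ttt_def)

lemma time_Suc: "tcol M (Suc \<tau>) = (if ttt M \<tau> \<le> M then tcol M \<tau> else Suc (tcol M \<tau>))"
  "ttt M (Suc \<tau>) = (if ttt M \<tau> \<le> M then Suc (ttt M \<tau>) else 1)"
  by (simp_all add: tcol_def ttt_def astep_time)

lemma time_block: "tcol M (Suc M * n) = n \<and> ttt M (Suc M * n) = Suc M"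
proof (induction n)
  case 0 then show ?case by (simp add: tcol_def ttt_def init_def)
next
  case (Suc n)
  have "tcol M (Suc M * n + Suc j) = Suc n \<and> ttt M (Suc M * n + Suc j) = Suc j" if "j \<le> M" for j
    using that
  proof (induction j)
    case 0 then show ?case using Suc.IH by (simp add: time_Suc)
  next
    case (Suc j) then show ?case by (simp add: time_Suc)
  qed
  from this[of M] show ?case by (simp add: add.commute)
qed

lemma ttt_pos: "1 \<le> ttt M \<tau>"
  by (cases \<tau>) (simp_all add: ttt_def init_def astep_time)

definition proc :: "nat \<Rightarrow> nat \<Rightarrow> nat \<Rightarrow> nat \<Rightarrow> nat \<Rightarrow> bool" where
  "proc M c t k m \<longleftrightarrow> 1 \<le> m \<and> m \<le> M \<and> 1 \<le> k \<and> (k < c \<or> (k = c \<and> m < t))"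

definition PS :: "nat \<Rightarrow> nat \<Rightarrow> nat \<Rightarrow> (nat \<Rightarrow> nat \<Rightarrow> 'a::zero) set" where
  "PS M c t = {a. \<forall>k m. \<not> proc M c t k m \<longrightarrow> a k m = 0}"

lemma proc_mono: "proc M (tcol M \<tau>) (ttt M \<tau>) k m \<Longrightarrow> proc M (tcol M (Suc \<tau>)) (ttt M (Suc \<tau>)) k m"
  by (auto simp: proc_def time_Suc)

lemma astep_cong:
  assumes "\<And>k. 1 \<le> k \<Longrightarrow> k \<le> ncol st \<Longrightarrow> a k (tt st) = a' k (tt st)"
  shows "astep M a st = astep M a' st"
proof -
  have "Ap a (tt st) (ncol st) = Ap a' (tt st) (ncol st)" by (rule Ap_cong) (use assms in auto)
  then have "Vv a (ncol st) (tt st) = Vv a' (ncol st) (tt st)" by (simp add: Vv_def fun_eq_iff)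
  then show ?thesis unfolding astep_def by simp
qed

lemma alg_cong:
  fixes a a' :: "nat \<Rightarrow> nat \<Rightarrow> 'a::field"
  shows "(\<And>k m. proc M (tcol M \<tau>) (ttt M \<tau>) k m \<Longrightarrow> a k m = a' k m) \<Longrightarrow> alg M a \<tau> = alg M a' \<tau>"
proof (induction \<tau>)
  case 0 then show ?case by simp
next
  case (Suc \<tau>)
  have eq: "alg M a \<tau> = alg M a' \<tau>" using Suc.IH Suc.prems proc_mono by blast
  show ?case
  proof (cases "ttt M \<tau> \<le> M")
    case True
    have "a k (tt (alg M a \<tau>)) = a' k (tt (alg M a \<tau>))" if "1 \<le> k" "k \<le> ncol (alg M a \<tau>)" for k
      using Suc.prems[of k "ttt M \<tau>"] that True ttt_pos[of M \<tau>]
      by (auto simp: alg_time proc_def time_Suc le_less)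
    then show ?thesis using eq by (simp add: astep_cong[of "alg M a' \<tau>" a a'])
  next
    case False
    then show ?thesis using eq by (simp add: astep_def alg_time)
  qed
qed

definition EE :: "nat \<Rightarrow> nat \<Rightarrow> nat \<Rightarrow> (nat \<times> nat) set" where
  "EE M c t = {(k, m). proc M c t k m}"

lemma EE_finite: "finite (EE M c t)"
proof -
  have "EE M c t \<subseteq> {..c} \<times> {..M}" by (auto simp: EE_def proc_def)
  then show ?thesis by (rule finite_subset) auto
qed

lemma PS_bij:
  "bij_betw (\<lambda>f k m. if (k, m) \<in> EE M c t then f (k, m) else (0::'a::zero)) (EE M c t \<rightarrow>\<^sub>E UNIV) (PS M c t)"
proof -
  let ?g = "\<lambda>f k m. if (k, m) \<in> EE M c t then f (k, m) else (0::'a)"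
  have "inj_on ?g (EE M c t \<rightarrow>\<^sub>E UNIV)"
  proof (rule inj_onI)
    fix f1 f2 assume f: "f1 \<in> EE M c t \<rightarrow>\<^sub>E UNIV" "f2 \<in> EE M c t \<rightarrow>\<^sub>E UNIV" "?g f1 = ?g f2"
    show "f1 = f2"
    proof (rule PiE_ext[OF f(1) f(2)])
      fix x assume x: "x \<in> EE M c t"
      obtain k m where "x = (k, m)" by (cases x)
      then show "f1 x = f2 x" using fun_cong[OF fun_cong[OF f(3), of k], of m] x by simp
    qed
  qed
  moreover have "?g ` (EE M c t \<rightarrow>\<^sub>E UNIV) = PS M c t"
  proof
    show "?g ` (EE M c t \<rightarrow>\<^sub>E UNIV) \<subseteq> PS M c t" by (auto simp: PS_def EE_def)
  next
    show "PS M c t \<subseteq> ?g ` (EE M c t \<rightarrow>\<^sub>E UNIV)"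
    proof
      fix a :: "nat \<Rightarrow> nat \<Rightarrow> 'a" assume a: "a \<in> PS M c t"
      have "a = ?g (restrict (\<lambda>(k, m). a k m) (EE M c t))"
        using a by (auto simp: PS_def EE_def fun_eq_iff)
      moreover have "restrict (\<lambda>(k, m). a k m) (EE M c t) \<in> EE M c t \<rightarrow>\<^sub>E UNIV" by simp
      ultimately show "a \<in> ?g ` (EE M c t \<rightarrow>\<^sub>E UNIV)" by blast
    qed
  qed
  ultimately show ?thesis by (simp add: bij_betw_def)
qed

lemma PS_finite: "finite (PS M c t :: (nat \<Rightarrow> nat \<Rightarrow> 'a::{finite,zero}) set)"
  using bij_betw_finite[OF PS_bij[where 'a='a, of M c t]] EE_finite by (simp add: finite_PiE)

lemma PS_card: "card (PS M c t :: (nat \<Rightarrow> nat \<Rightarrow> 'a::{finite,zero}) set) = CARD('a) ^ card (EE M c t)"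
proof -
  have "card (PS M c t :: (nat \<Rightarrow> nat \<Rightarrow> 'a) set) = card (EE M c t \<rightarrow>\<^sub>E (UNIV :: 'a set))"
    using bij_betw_same_card[OF PS_bij[where 'a='a, of M c t]] by simp
  also have "\<dots> = CARD('a) ^ card (EE M c t)" using EE_finite by (simp add: card_PiE)
  finally show ?thesis .
qed

lemma PS_ne: "(\<lambda>_ _. 0) \<in> PS M c t" by (simp add: PS_def)

lemma proc_wrap: "proc M (Suc c) (Suc 0) k m \<longleftrightarrow> proc M c (Suc M) k m"
  unfolding proc_def by auto

lemma PS_wrap: "PS M (Suc c) (Suc 0) = PS M c (Suc M)"
  unfolding PS_def proc_wrap ..

lemma PS_split:
  assumes t: "1 \<le> t" "t \<le> M" and c: "1 \<le> c"
  shows "PS M c (Suc t) = (\<Union>a\<in>PS M c t. range (\<lambda>x. a(c := (a c)(t := x))))"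
proof
  show "PS M c (Suc t) \<subseteq> (\<Union>a\<in>PS M c t. range (\<lambda>x. a(c := (a c)(t := x))))"
  proof
    fix a' assume a': "a' \<in> PS M c (Suc t)"
    have "a'(c := (a' c)(t := 0)) \<in> PS M c t" using a' by (auto simp: PS_def proc_def less_Suc_eq)
    moreover have "a' = (a'(c := (a' c)(t := 0)))(c := ((a'(c := (a' c)(t := 0))) c)(t := a' c t))"
      by (auto simp: fun_eq_iff)
    ultimately show "a' \<in> (\<Union>a\<in>PS M c t. range (\<lambda>x. a(c := (a c)(t := x))))" by blast
  qed
next
  show "(\<Union>a\<in>PS M c t. range (\<lambda>x. a(c := (a c)(t := x)))) \<subseteq> PS M c (Suc t)"
    using t c by (auto simp: PS_def proc_def less_Suc_eq)
qed

lemma PS_disj: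
  assumes t: "1 \<le> t" "t \<le> M" and c: "1 \<le> c"
  shows "disjoint_family_on (\<lambda>a. range (\<lambda>x. a(c := (a c)(t := x)))) (PS M c t)"
  unfolding disjoint_family_on_def
proof (intro ballI impI)
  fix a b :: "nat \<Rightarrow> nat \<Rightarrow> 'a" assume ab: "a \<in> PS M c t" "b \<in> PS M c t" "a \<noteq> b"
  have a0: "a c t = 0" "b c t = 0" using ab(1,2) by (auto simp: PS_def proc_def)
  show "range (\<lambda>x. a(c := (a c)(t := x))) \<inter> range (\<lambda>x. b(c := (b c)(t := x))) = {}"
  proof (rule ccontr)
    assume "range (\<lambda>x. a(c := (a c)(t := x))) \<inter> range (\<lambda>x. b(c := (b c)(t := x))) \<noteq> {}"
    then obtain x y where xy: "a(c := (a c)(t := x)) = b(c := (b c)(t := y))" by blast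
    have "a = b"
    proof (intro ext)
      fix k m
      show "a k m = b k m"
        using fun_cong[OF fun_cong[OF xy, of k], of m] a0 by (cases "k = c"; cases "m = t") auto
    qed
    then show False using ab(3) by simp
  qed
qed

lemma upd_inj: "inj (\<lambda>x. a(c := (a c)(t := x)))"
proof (rule injI)
  fix x y assume "a(c := (a c)(t := x)) = a(c := (a c)(t := y))"
  from fun_cong[OF fun_cong[OF this, of c], of t] show "x = y" by simp
qed

lemma mu_eq:
  "bdm_mu CARD('a) M \<tau> = map_pmf (\<lambda>a::nat \<Rightarrow> nat \<Rightarrow> 'a::{finite,field}. proj M (alg M a \<tau>))
      (pmf_of_set (PS M (tcol M \<tau>) (ttt M \<tau>)))"
proof (induction \<tau>)
  case 0
  have "PS M 0 (Suc M) = {\<lambda>_ _. (0::'a)}" by (auto simp: PS_def proc_def)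
  moreover have "proj M (init M :: 'a poly ast) = s_init M"
  proof -
    have "map (\<lambda>m. int (nu (init M :: 'a poly ast) m) - int (nk (init M :: 'a poly ast) m) - 1 + int (ncol (init M :: 'a poly ast) div Suc M)) [1..<Suc M]
       = map (\<lambda>_. 0) [1..<Suc M]"
      by (rule map_cong) (auto simp: init_def nk_def)
    then show ?thesis by (simp add: proj_def s_init_def map_replicate_const del: upt_Suc) (simp add: init_def)
  qed
  ultimately show ?case by (simp add: tcol_def ttt_def pmf_of_set_singleton)
next
  case (Suc \<tau>)
  define P where "P = (PS M (tcol M \<tau>) (ttt M \<tau>) :: (nat \<Rightarrow> nat \<Rightarrow> 'a) set)"
  have Pfin: "finite P" "P \<noteq> {}" unfolding P_def
    using PS_finite[where 'a='a] PS_ne[where 'a='a, of M "tcol M \<tau>" "ttt M \<tau>"] by auto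
  have "bdm_mu CARD('a) M (Suc \<tau>) = bind_pmf (pmf_of_set P) (\<lambda>a. bdm_step CARD('a) M (proj M (alg M a \<tau>)))"
    using Suc.IH by (simp add: P_def bind_map_pmf)
  also have "\<dots> = map_pmf (\<lambda>a :: nat \<Rightarrow> nat \<Rightarrow> 'a. proj M (alg M a (Suc \<tau>))) (pmf_of_set (PS M (tcol M (Suc \<tau>)) (ttt M (Suc \<tau>))))"
  proof (cases "ttt M \<tau> \<le> M")
    case False
    have "bind_pmf (pmf_of_set P) (\<lambda>a. bdm_step CARD('a) M (proj M (alg M a \<tau>)))
        = bind_pmf (pmf_of_set P) (\<lambda>a. return_pmf (proj M (alg M a (Suc \<tau>))))"
    proof (rule bind_pmf_cong[OF refl])
      fix a :: "nat \<Rightarrow> nat \<Rightarrow> 'a"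
      have "tt (alg M a \<tau>) = Suc M" using False alg_time(2)[of M a \<tau>] INV_alg[of M a \<tau>] by (simp add: INV_def)
      then show "bdm_step CARD('a) M (proj M (alg M a \<tau>)) = return_pmf (proj M (alg M a (Suc \<tau>)))"
        by (simp add: wrap_step)
    qed
    moreover have eqPS: "PS M (tcol M (Suc \<tau>)) (ttt M (Suc \<tau>)) = P"
    proof -
      have "ttt M \<tau> = Suc M" using False alg_time(2)[of M "\<lambda>_ _. 0::real" \<tau>] INV_alg[of M "\<lambda>_ _. 0::real" \<tau>]
        by (simp add: INV_def)
      then show ?thesis using False by (simp add: P_def time_Suc PS_wrap)
    qed
    ultimately show ?thesis unfolding eqPS map_pmf_def by simp
  next
    case True
    define c where "c = tcol M \<tau>"
    define t where "t = ttt M \<tau>"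
    have t: "1 \<le> t" "t \<le> M" using True ttt_pos by (auto simp: t_def)
    have c: "1 \<le> c" using INV_alg[of M "\<lambda>_ _. 0::real" \<tau>] True alg_time[of M "\<lambda>_ _. 0::real" \<tau>]
      by (simp add: INV_def c_def)
    define upd where "upd a x = a(c := (a c)(t := x))" for a :: "nat \<Rightarrow> nat \<Rightarrow> 'a" and x
    have "bind_pmf (pmf_of_set P) (\<lambda>a. bdm_step CARD('a) M (proj M (alg M a \<tau>)))
        = bind_pmf (pmf_of_set P) (\<lambda>a. map_pmf (\<lambda>a. proj M (alg M a (Suc \<tau>))) (pmf_of_set (range (upd a))))"
    proof (rule bind_pmf_cong[OF refl])
      fix a :: "nat \<Rightarrow> nat \<Rightarrow> 'a" assume a: "a \<in> set_pmf (pmf_of_set P)"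
      then have aP: "a \<in> P" using Pfin by simp
      have tt: "tt (alg M a \<tau>) = t" "ncol (alg M a \<tau>) = c" by (simp_all add: alg_time t_def c_def)
      have alg_eq: "alg M (upd a x) \<tau> = alg M a \<tau>" for x
        by (rule alg_cong) (auto simp: upd_def proc_def c_def[symmetric] t_def[symmetric])
      have "bdm_step CARD('a) M (proj M (alg M a \<tau>)) = map_pmf (\<lambda>x. proj M (astep M (upd a x) (alg M a \<tau>))) (pmf_of_set UNIV)"
        using loc_step[OF INV_alg[of M a \<tau>]] tt t by (simp add: upd_def)
      also have "\<dots> = map_pmf (\<lambda>x. proj M (alg M (upd a x) (Suc \<tau>))) (pmf_of_set UNIV)"
        by (simp add: alg_eq)
      also have "\<dots> = map_pmf (\<lambda>a. proj M (alg M a (Suc \<tau>))) (map_pmf (upd a) (pmf_of_set UNIV))"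
        by (simp add: pmf.map_comp o_def)
      also have "map_pmf (upd a) (pmf_of_set UNIV) = pmf_of_set (range (upd a))"
        by (rule map_pmf_of_set_inj) (auto simp: upd_def[abs_def] upd_inj)
      finally show "bdm_step CARD('a) M (proj M (alg M a \<tau>)) = map_pmf (\<lambda>a. proj M (alg M a (Suc \<tau>))) (pmf_of_set (range (upd a)))" .
    qed
    also have "\<dots> = map_pmf (\<lambda>a. proj M (alg M a (Suc \<tau>))) (bind_pmf (pmf_of_set P) (\<lambda>a. pmf_of_set (range (upd a))))"
      by (simp add: map_bind_pmf)
    also have "bind_pmf (pmf_of_set P) (\<lambda>a. pmf_of_set (range (upd a))) = pmf_of_set (\<Union>a\<in>P. range (upd a))"
    proof (rule pmf_of_set_UN[symmetric])
      show "finite (\<Union>a\<in>P. range (upd a))" using Pfin by simp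
      show "P \<noteq> {}" by (rule Pfin(2))
      show "\<And>a. a \<in> P \<Longrightarrow> range (upd a) \<noteq> {}" by simp
      show "card (range (upd a)) = CARD('a)" if "a \<in> P" for a
        using card_image[OF upd_inj[of a c t]] by (simp add: upd_def[abs_def])
      show "disjoint_family_on (\<lambda>a. range (upd a)) P"
        using PS_disj[where 'a='a, OF t c] by (simp add: upd_def[abs_def] P_def c_def t_def)
    qed
    also have "(\<Union>a\<in>P. range (upd a)) = PS M (tcol M (Suc \<tau>)) (ttt M (Suc \<tau>))"
      using PS_split[where 'a='a, OF t c] True by (simp add: P_def upd_def time_Suc c_def t_def)
    finally show ?thesis .
  qed
  finally show ?case .
qed

lemma ceil_dev: "\<lceil>real (n * M) / real (M + 1)\<rceil> = int (n - n div Suc M)"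
proof -
  have "real (n * M) / real (M + 1) = of_int (int (n * M)) / of_int (int (M + 1))" by simp
  then have "\<lceil>real (n * M) / real (M + 1)\<rceil> = - (- int (n * M) div int (M + 1))"
    by (simp only: ceiling_divide_eq_div)
  also have "- int (n * M) = int n + (- int n) * int (M + 1)" by (simp add: algebra_simps)
  also have "(int n + (- int n) * int (M + 1)) div int (M + 1) = - int n + int n div int (M + 1)"
    by (subst div_mult_self1) simp_all
  also have "int n div int (M + 1) = int (n div Suc M)" by (simp add: zdiv_int)
  finally show ?thesis by (simp add: of_nat_diff div_le_dividend)
qed

lemma proj_states:
  fixes a :: "nat \<Rightarrow> nat \<Rightarrow> 'a::field"
  assumes I: "INV M a st"
  shows "proj M st \<in> bdm_states M"
proof -
  define n where "n = ncol st"
  define Q where "Q = n div Suc M"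
  have sumI: "(\<Sum>j\<le>M. nu st j) = (\<Sum>m=1..M. nk st m) + M" using I by (simp add: INV_def)
  have split: "(\<Sum>j\<le>M. nu st j) = nu st 0 + (\<Sum>m=1..M. nu st m)"
  proof -
    have "{..M} = insert 0 {1..M}" by auto
    then show ?thesis by simp
  qed
  have sl: "sum_list (map (\<lambda>m. int (nu st m) - int (nk st m) - 1 + int Q) [1..<Suc M])
      = (\<Sum>m=1..M. int (nu st m)) - (\<Sum>m=1..M. int (nk st m)) - int M + int M * int Q"
  proof -
    have "sum_list (map (\<lambda>m. int (nu st m) - int (nk st m) - 1 + int Q) [1..<Suc M])
        = (\<Sum>m=1..M. int (nu st m) - int (nk st m) - 1 + int Q)"
      by (simp add: sum_set_upt_conv_sum_list_nat[symmetric] atLeastLessThanSuc_atLeastAtMost del: upt_Suc)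
    also have "\<dots> = (\<Sum>m=1..M. int (nu st m)) - (\<Sum>m=1..M. int (nk st m)) - int M + int M * int Q"
      by (simp add: sum.distrib sum_subtractf)
    finally show ?thesis .
  qed
  have "n = Suc M * Q + n mod Suc M" unfolding Q_def by (rule mult_div_mod_eq[symmetric])
  then have nQ: "int n = int (Suc M) * int Q + int (n mod Suc M)"
    by (metis of_nat_add of_nat_mult)
  have Qn: "Q \<le> n" by (simp add: Q_def)
  have sumI': "int (nu st 0) + (\<Sum>m=1..M. int (nu st m)) = (\<Sum>m=1..M. int (nk st m)) + int M"
    using arg_cong[OF sumI[unfolded split], of int] by simp
  have "int (nu st 0) - int (n - Q) + int (n mod Suc M)
     + sum_list (map (\<lambda>m. int (nu st m) - int (nk st m) - 1 + int Q) [1..<Suc M]) = 0"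
    unfolding sl using sumI' nQ Qn by (simp add: of_nat_diff algebra_simps)
  moreover have "1 \<le> tt st" "tt st \<le> Suc M" using I by (auto simp: INV_def)
  moreover have "n mod Suc M \<le> M" using mod_less_divisor[of "Suc M" n] by simp
  ultimately show ?thesis
    unfolding bdm_states_def aug_states_def proj_def n_def[symmetric] Q_def[symmetric]
    by (simp del: upt_Suc)
qed

lemma EE_final: "EE M n (Suc M) = {1..n} \<times> {1..M}"
  by (auto simp: EE_def proc_def)

lemma prefixes_PS: "prefixes M n = PS M n (Suc M)"
  unfolding prefixes_def PS_def proc_def by (rule Collect_cong) (auto simp: le_less)

theorem mainTheorem13:
  fixes M n :: nat and d T0 :: int
  assumes "M \<ge> 1"
    and "0 \<le> T0" and "T0 \<le> int M" and "T0 mod int (M + 1) = int n mod int (M + 1)"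
  shows "real (Ncount TYPE('a::{finite,field}) M n d)
         = real CARD('a) ^ (M * n)
           * infsum (\<lambda>s. pmf (bdm_mu CARD('a) M ((M + 1) * n)) s) (S_set M T0 (M + 1) d)"
proof -
  define \<tau> where "\<tau> = Suc M * n"
  define P where "P = (prefixes M n :: (nat \<Rightarrow> nat \<Rightarrow> 'a) set)"
  define G where "G a = proj M (alg M a \<tau>)" for a :: "nat \<Rightarrow> nat \<Rightarrow> 'a"
  define S where "S = S_set M T0 (M + 1) d"
  have time: "tcol M \<tau> = n" "ttt M \<tau> = Suc M" using time_block[of M n] by (simp_all add: \<tau>_def)
  have PPS: "P = PS M n (Suc M)" by (simp add: P_def prefixes_PS)
  have Pfin: "finite P" "P \<noteq> {}" unfolding PPS using PS_finite[where 'a='a] PS_ne[where 'a='a, of M n "Suc M"] by auto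
  have cardP: "card P = CARD('a) ^ (M * n)"
    unfolding PPS PS_card EE_final by (simp add: mult.commute)
  have "bdm_mu CARD('a) M \<tau> = map_pmf (\<lambda>a :: nat \<Rightarrow> nat \<Rightarrow> 'a. proj M (alg M a \<tau>)) (pmf_of_set (PS M (tcol M \<tau>) (ttt M \<tau>)))"
    by (rule mu_eq)
  then have mu: "bdm_mu CARD('a) M ((M + 1) * n) = map_pmf G (pmf_of_set P)"
    unfolding time PPS[symmetric] G_def[abs_def] by (simp add: \<tau>_def)
  have T0: "T0 = int (n mod Suc M)"
  proof -
    have "T0 = T0 mod int (M + 1)" using assms(2,3) by simp
    also have "\<dots> = int n mod int (M + 1)" by (rule assms(4))
    finally show ?thesis by (simp add: zmod_int)
  qed
  have key: "a \<in> P \<Longrightarrow> (lc_dev M a n = d \<longleftrightarrow> G a \<in> S)" for a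
  proof -
    assume "a \<in> P"
    define st where "st = alg M a \<tau>"
    have I: "INV M a st" by (simp add: st_def INV_alg)
    have tt: "tt st = Suc M" "ncol st = n" using time by (simp_all add: st_def alg_time)
    have lc: "lin_compl M a n = nu st 0" using lin_compl_alg[OF I tt(1)] tt(2) by simp
    have "lc_dev M a n = int (nu st 0) - int (n - n div Suc M)"
      unfolding lc_dev_def lc ceil_dev by simp
    moreover have "G a \<in> bdm_states M" using proj_states[OF I] by (simp add: G_def st_def)
    ultimately show ?thesis
      by (auto simp: S_def S_set_def G_def proj_def tt T0 st_def[symmetric] simp del: upt_Suc)
  qed
  have "{a. a \<in> P \<and> lc_dev M a n = d} = P \<inter> G -` S" using key by auto
  then have N: "Ncount TYPE('a) M n d = card (P \<inter> G -` S)"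
    by (simp add: Ncount_def P_def)
  have "infsum (\<lambda>s. pmf (bdm_mu CARD('a) M ((M + 1) * n)) s) S = measure (map_pmf G (pmf_of_set P)) S"
    unfolding mu by (simp add: measure_pmf_conv_infsetsum infsetsum_infsum[OF pmf_abs_summable])
  also have "\<dots> = card (P \<inter> G -` S) / card P"
    using Pfin by (simp add: measure_pmf_of_set)
  finally show ?thesis using cardP N by (simp add: S_def)
qed

end
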